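(* There exists a two-stack automaton $\Gamma_1$ such that $\alpha_n:=G(\Gamma_1,n)\in\{0,1\}$ for all $n$, and such that the infinite binary word $\alpha_1\alpha_2\alpha_3\cdots$ contains every finite binary word as a (consecutive) subword.
   Context: Let $X=\{x_i: i\in\mathbb Z\}$, $X^{-1}=\{x_i^{-1}\}$, $Y=\{y_i\}$, $Y^{-1}=\{y_i^{-1}\}$ be formal labels, and $\varepsilon$ a further label; write $w_1\sim w_2$ if both lie in $X\cup X^{-1}$ or both lie in $Y\cup Y^{-1}$. A two-stack automaton is a finite directed graph $\Gamma$ with vertices $v_1,\dots,v_m$, each vertex $v$ labelled by $\rho(v)\in X\cup X^{-1}\cup Y\cup Y^{-1}\cup\{\varepsilon\}$, such that $\rho(v_1)=\rho(v_2)=\varepsilon$ and there is no edge $v_i\to v_j$ with $\rho(v_i)\sim\rho(v_j)$. A path $\gamma=\gamma_1\cdots\gamma_n$ is a sequence of vertices joined by edges; its length is $n$. Traversing $\gamma$, keep two words $w_X\in X^*$, $w_Y\in Y^*$, initially empty; entering a vertex labelled $x_i$ appends $x_i$ to $w_X$, labelled $x_i^{-1}$ removes $x_i$ from the end of $w_X$ (similarly for $Y$ and $w_Y$), and labelled $\varepsilon$ does nothing. The path is balanced if every step is well defined and both words are empty at the end. $G(\Gamma,n)$ denotes the number of balanced paths of length $n$ from $v_1$ to $v_2$. *)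

theory Defs
  imports Main
begin

datatype label = X int | Xinv int | Y int | Yinv int | Eps

definition is_xlabel :: "label \<Rightarrow> bool" where
  "is_xlabel l \<longleftrightarrow> (\<exists>i. l = X i \<or> l = Xinv i)"

definition is_ylabel :: "label \<Rightarrow> bool" where
  "is_ylabel l \<longleftrightarrow> (\<exists>i. l = Y i \<or> l = Yinv i)"

definition sim_label :: "label \<Rightarrow> label \<Rightarrow> bool" where
  "sim_label a b \<longleftrightarrow> (is_xlabel a \<and> is_xlabel b) \<or> (is_ylabel a \<and> is_ylabel b)"

definition two_stack_automaton :: "nat \<Rightarrow> (nat \<Rightarrow> label) \<Rightarrow> (nat \<times> nat) set \<Rightarrow> bool" where
  "two_stack_automaton m rho E \<longleftrightarrow>
     2 \<le> m \<and> E \<subseteq> {1..m} \<times> {1..m} \<and> rho 1 = Eps \<and> rho 2 = Eps \<and>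
     (\<forall>(u, v) \<in> E. \<not> sim_label (rho u) (rho v))"

text \<open>Effect of entering a vertex with the given label on the pair of words (w_X, w_Y)
  (words stored as lists of indices); None means the step is not well defined.\<close>
fun step :: "label \<Rightarrow> (int list \<times> int list) option \<Rightarrow> (int list \<times> int list) option" where
  "step _ None = None"
| "step (X i) (Some (wx, wy)) = Some (wx @ [i], wy)"
| "step (Xinv i) (Some (wx, wy)) =
     (if wx \<noteq> [] \<and> last wx = i then Some (butlast wx, wy) else None)"
| "step (Y i) (Some (wx, wy)) = Some (wx, wy @ [i])"
| "step (Yinv i) (Some (wx, wy)) =
     (if wy \<noteq> [] \<and> last wy = i then Some (wx, butlast wy) else None)"
| "step Eps s = s"

definition run :: "(nat \<Rightarrow> label) \<Rightarrow> nat list \<Rightarrow> (int list \<times> int list) option" where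
  "run rho \<gamma> = fold (\<lambda>v s. step (rho v) s) \<gamma> (Some ([], []))"

definition balanced :: "(nat \<Rightarrow> label) \<Rightarrow> nat list \<Rightarrow> bool" where
  "balanced rho \<gamma> \<longleftrightarrow> run rho \<gamma> = Some ([], [])"

text \<open>A path is a nonempty sequence of vertices consecutive ones joined by edges;
  its length is the number of vertices.\<close>
definition is_path :: "nat \<Rightarrow> (nat \<times> nat) set \<Rightarrow> nat list \<Rightarrow> bool" where
  "is_path m E \<gamma> \<longleftrightarrow> \<gamma> \<noteq> [] \<and> set \<gamma> \<subseteq> {1..m} \<and>
     (\<forall>k. Suc k < length \<gamma> \<longrightarrow> (\<gamma> ! k, \<gamma> ! Suc k) \<in> E)"

definition G :: "nat \<Rightarrow> (nat \<Rightarrow> label) \<Rightarrow> (nat \<times> nat) set \<Rightarrow> nat \<Rightarrow> nat" where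
  "G m rho E n = card {\<gamma>. is_path m E \<gamma> \<and> length \<gamma> = n \<and> hd \<gamma> = 1 \<and> last \<gamma> = 2
                          \<and> balanced rho \<gamma>}"

end

theory Submission
  imports Defs
begin


definition lbls :: "label list" where
 "lbls = [Eps, Eps, Eps, X 1, Y 1, X 0, Eps, Xinv 0, Y 0, Eps, Y 0, Xinv 1, Eps, Eps, X 1,
  Xinv 1, Eps, X 2, Xinv 2, Eps, X 2, Y 0, Eps, Eps, Eps, Eps, Eps, Yinv 0, X 0, Yinv 1, Eps,
  Y 1, Xinv 0, Eps, Xinv 0, Y 0, Xinv 2, Eps, X 2, Yinv 0, X 0, Yinv 1, Eps, Y 1, Xinv 2, Yinv 1]"

definition sl :: "nat list list" where
 "sl = [[], [3], [], [4], [5], [6], [7], [8], [9], [10], [7,11,15,18], [12], [13], [14], [21,27],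
  [16], [17], [21], [19], [20], [21,27], [22], [23], [24], [25], [26], [27], [28], [27,29], [30],
  [31], [7,32,44], [33], [34,36], [35], [34,36], [37], [38], [39,41], [40], [39,41], [42], [43],
  [32,44], [45], [2]]"

definition rh :: "nat \<Rightarrow> label" where "rh v = (if v < 46 then lbls ! v else Eps)"
definition succs :: "nat \<Rightarrow> nat list" where "succs v = (if v < 46 then sl ! v else [])"
definition EE :: "(nat \<times> nat) set" where "EE = {(v,w). v \<in> {1..45} \<and> w \<in> set (succs v)}"

lemma "length lbls = 46" "length sl = 46" by (simp_all add: lbls_def sl_def)


lemma succs_ok: "\<forall>v \<in> set [0..<46]. \<forall>w\<in>set (succs v). 1 \<le> w \<and> w \<le> 45 \<and> \<not> sim_label (rh v) (rh w)"
    by (simp add: succs_def sl_def rh_def lbls_def sim_label_def is_xlabel_def is_ylabel_def upt_rec)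

lemma succs_range: "w \<in> set (succs v) \<Longrightarrow> w \<in> {1..45}"
proof -
  assume a: "w \<in> set (succs v)"
  then have "v < 46" by (simp add: succs_def split: if_splits)
  then show ?thesis using a succs_ok by auto
qed

lemma aut: "two_stack_automaton 45 rh EE"
proof -
  have e: "EE \<subseteq> {1..45} \<times> {1..45}" unfolding EE_def using succs_range by auto
  have n: "\<forall>(u, v) \<in> EE. \<not> sim_label (rh u) (rh v)"
  proof (clarify)
    fix u v assume "(u, v) \<in> EE" "sim_label (rh u) (rh v)"
    then have "u \<in> set [0..<46]" "v \<in> set (succs u)" by (auto simp: EE_def)
    then show False using succs_ok \<open>sim_label (rh u) (rh v)\<close> by blast
  qed
  show ?thesis unfolding two_stack_automaton_def using e n by (simp add: rh_def lbls_def)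
qed

definition PL :: "nat \<Rightarrow> (int list \<times> int list) option \<Rightarrow> nat \<Rightarrow> nat list set" where
  "PL v s N = {q. is_path 45 EE (v#q) \<and> last (v#q) = 2 \<and>
     fold (\<lambda>w s. step (rh w) s) q s = Some ([],[]) \<and> length q < N}"

definition goodL :: "nat \<Rightarrow> (int list \<times> int list) option \<Rightarrow> nat set \<Rightarrow> nat \<Rightarrow> bool" where
  "goodL v s A N \<longleftrightarrow> inj_on length (PL v s N) \<and> length ` PL v s N = {n \<in> A. n < N}"

lemma is_path_single: "is_path m E [v] \<longleftrightarrow> v \<in> {1..m}"
  by (auto simp: is_path_def)

lemma is_path_Cons2: "is_path m E (v # w # q) \<longleftrightarrow> (v,w) \<in> E \<and> v \<in> {1..m} \<and> is_path m E (w#q)"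
proof
  assume a: "is_path m E (v # w # q)"
  have "(v,w) \<in> E" using a unfolding is_path_def by (metis length_Cons nth_Cons_0 nth_Cons_Suc zero_less_Suc Suc_less_eq)
  moreover have "\<forall>k. Suc k < length (w#q) \<longrightarrow> ((w#q) ! k, (w#q) ! Suc k) \<in> E"
  proof (intro allI impI)
    fix k assume "Suc k < length (w#q)"
    then have "Suc (Suc k) < length (v#w#q)" by simp
    then show "((w#q) ! k, (w#q) ! Suc k) \<in> E" using a unfolding is_path_def by (metis nth_Cons_Suc)
  qed
  ultimately show "(v,w) \<in> E \<and> v \<in> {1..m} \<and> is_path m E (w#q)" using a unfolding is_path_def by auto
next
  assume a: "(v,w) \<in> E \<and> v \<in> {1..m} \<and> is_path m E (w#q)"
  have "\<forall>k. Suc k < length (v#w#q) \<longrightarrow> ((v#w#q) ! k, (v#w#q) ! Suc k) \<in> E"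
  proof (intro allI impI)
    fix k assume k: "Suc k < length (v#w#q)"
    show "((v#w#q) ! k, (v#w#q) ! Suc k) \<in> E"
    proof (cases k)
      case 0 then show ?thesis using a by simp
    next
      case (Suc k') then show ?thesis using a k unfolding is_path_def by simp
    qed
  qed
  then show "is_path m E (v # w # q)" using a unfolding is_path_def by auto
qed

lemma fold_None: "fold (\<lambda>w s. step (rh w) s) q None = None"
  by (induction q) auto

lemma PL_None: "PL v None N = {}"
  by (simp add: PL_def fold_None)

lemma EE_iff: "v \<in> {1..45} \<Longrightarrow> (v,w) \<in> EE \<longleftrightarrow> w \<in> set (succs v)"
  by (auto simp: EE_def)

lemma PL_unfold: assumes v: "v \<in> {1..45}"
  shows "PL v s N = (if v = 2 \<and> s = Some ([],[]) \<and> 0 < N then {[]} else {}) \<union>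
          (\<Union>w\<in>set (succs v). Cons w ` PL w (step (rh w) s) (N - 1))" (is "?L = ?R")
proof (intro set_eqI iffI)
  fix q assume q: "q \<in> ?L"
  show "q \<in> ?R"
  proof (cases q)
    case Nil then show ?thesis using q by (auto simp: PL_def)
  next
    case (Cons w q')
    then have "w \<in> set (succs v)" using q v by (auto simp: PL_def is_path_Cons2 EE_iff)
    moreover have "q' \<in> PL w (step (rh w) s) (N - 1)" using q Cons by (auto simp: PL_def is_path_Cons2)
    ultimately show ?thesis using Cons by blast
  qed
next
  fix q assume q: "q \<in> ?R"
  show "q \<in> ?L"
  proof (cases q)
    case Nil then show ?thesis using q v by (auto simp: PL_def is_path_single split: if_splits)
  next
    case (Cons w q')
    then have w: "w \<in> set (succs v)" and q': "q' \<in> PL w (step (rh w) s) (N - 1)" using q by (auto split: if_splits)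
    then show ?thesis using Cons v by (auto simp: PL_def is_path_Cons2 EE_iff)
  qed
qed

lemma goodL_0: "goodL v s A 0" by (simp add: goodL_def PL_def)

lemma goodL_None: "goodL v None {} N" by (simp add: goodL_def PL_None)

lemma goodL_cong: "goodL v s A N \<Longrightarrow> A = B \<Longrightarrow> goodL v s B N" by simp

lemma goodL_end: "goodL 2 (Some ([],[])) {0} N"
proof -
  have "PL 2 (Some ([],[])) N = (if 0 < N then {[]} else {})"
    by (subst PL_unfold) (auto simp: succs_def sl_def)
  then show ?thesis by (auto simp: goodL_def)
qed

lemma goodL_gen:
  assumes v: "v \<in> {1..45}" "v \<noteq> 2"
  and g: "\<And>w. w \<in> set (succs v) \<Longrightarrow> goodL w (step (rh w) s) (A w) (N - 1)"
  and disj: "\<And>w1 w2. w1 \<in> set (succs v) \<Longrightarrow> w2 \<in> set (succs v) \<Longrightarrow> w1 \<noteq> w2 \<Longrightarrow> A w1 \<inter> A w2 = {}"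
  shows "goodL v s (\<Union>w\<in>set (succs v). Suc ` A w) N"
proof -
  have P: "PL v s N = (\<Union>w\<in>set (succs v). Cons w ` PL w (step (rh w) s) (N - 1))"
    using PL_unfold[OF v(1)] v(2) by simp
  have inj: "inj_on length (PL v s N)"
  proof (rule inj_onI)
    fix q1 q2 assume q1: "q1 \<in> PL v s N" and q2: "q2 \<in> PL v s N" and l: "length q1 = length q2"
    obtain w1 r1 where w1: "w1 \<in> set (succs v)" "q1 = w1 # r1" "r1 \<in> PL w1 (step (rh w1) s) (N - 1)"
      using q1 P by auto
    obtain w2 r2 where w2: "w2 \<in> set (succs v)" "q2 = w2 # r2" "r2 \<in> PL w2 (step (rh w2) s) (N - 1)"
      using q2 P by auto
    have lr: "length r1 = length r2" using l w1 w2 by simp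
    have "length r1 \<in> A w1" using g[OF w1(1)] w1(3) unfolding goodL_def by blast
    moreover have "length r2 \<in> A w2" using g[OF w2(1)] w2(3) unfolding goodL_def by blast
    ultimately have "w1 = w2" using disj[OF w1(1) w2(1)] lr by auto
    then have "r1 = r2" using g[OF w1(1)] w1(3) w2(3) lr unfolding goodL_def inj_on_def by auto
    then show "q1 = q2" using w1 w2 \<open>w1 = w2\<close> by simp
  qed
  have img: "length ` PL v s N = {n \<in> (\<Union>w\<in>set (succs v). Suc ` A w). n < N}"
  proof (intro set_eqI iffI)
    fix n assume "n \<in> length ` PL v s N"
    then obtain w r where w: "w \<in> set (succs v)" "n = Suc (length r)" "r \<in> PL w (step (rh w) s) (N - 1)"
      using P by auto
    then have "length r \<in> {n \<in> A w. n < N - 1}" using g[OF w(1)] unfolding goodL_def by blast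
    then show "n \<in> {n \<in> (\<Union>w\<in>set (succs v). Suc ` A w). n < N}" using w by auto
  next
    fix n assume "n \<in> {n \<in> (\<Union>w\<in>set (succs v). Suc ` A w). n < N}"
    then obtain w k where w: "w \<in> set (succs v)" "k \<in> A w" "n = Suc k" "Suc k < N" by auto
    then have "k \<in> length ` PL w (step (rh w) s) (N - 1)" using g[OF w(1)] unfolding goodL_def by auto
    then obtain r where "r \<in> PL w (step (rh w) s) (N - 1)" "length r = k" by auto
    then have "w # r \<in> PL v s N" using P w by auto
    then show "n \<in> length ` PL v s N" using w \<open>length r = k\<close> by force
  qed
  show ?thesis using inj img unfolding goodL_def by blast
qed

lemma v_range: "v \<in> {1..45} \<Longrightarrow> True" by simp

lemma goodL1:
  assumes "v \<in> {1..45}" "v \<noteq> 2" "succs v = [w]" "goodL w (step (rh w) s) A (N - 1)"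
  shows "goodL v s (Suc ` A) N"
  using goodL_gen[of v s "\<lambda>_. A" N] assms by simp

lemma goodL2:
  assumes "v \<in> {1..45}" "v \<noteq> 2" "succs v = [w1, w2]" "w1 \<noteq> w2"
    "goodL w1 (step (rh w1) s) A1 (N - 1)" "goodL w2 (step (rh w2) s) A2 (N - 1)" "A1 \<inter> A2 = {}"
  shows "goodL v s (Suc ` A1 \<union> Suc ` A2) N"
proof -
  have "goodL v s (\<Union>w\<in>set (succs v). Suc ` (if w = w1 then A1 else A2)) N"
    by (rule goodL_gen) (use assms in \<open>auto simp: Int_commute\<close>)
  then show ?thesis using assms(3,4) by (auto elim!: goodL_cong)
qed

lemma goodL3:
  assumes "v \<in> {1..45}" "v \<noteq> 2" "succs v = [w1, w2, w3]" "distinct [w1,w2,w3]"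
    "goodL w1 (step (rh w1) s) A1 (N - 1)" "goodL w2 (step (rh w2) s) A2 (N - 1)"
    "goodL w3 (step (rh w3) s) A3 (N - 1)"
    "A1 \<inter> A2 = {}" "A1 \<inter> A3 = {}" "A2 \<inter> A3 = {}"
  shows "goodL v s (Suc ` A1 \<union> Suc ` A2 \<union> Suc ` A3) N"
proof -
  have "goodL v s (\<Union>w\<in>set (succs v). Suc ` (if w = w1 then A1 else if w = w2 then A2 else A3)) N"
    by (rule goodL_gen) (use assms in \<open>auto simp: Int_commute\<close>)
  then show ?thesis using assms(3,4) by (auto elim!: goodL_cong)
qed

lemma goodL4:
  assumes "v \<in> {1..45}" "v \<noteq> 2" "succs v = [w1, w2, w3, w4]" "distinct [w1,w2,w3,w4]"
    "goodL w1 (step (rh w1) s) A1 (N - 1)" "goodL w2 (step (rh w2) s) {} (N - 1)"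
    "goodL w3 (step (rh w3) s) {} (N - 1)" "goodL w4 (step (rh w4) s) {} (N - 1)"
  shows "goodL v s (Suc ` A1) N"
proof -
  have "goodL v s (\<Union>w\<in>set (succs v). Suc ` (if w = w1 then A1 else {})) N"
    by (rule goodL_gen) (use assms in \<open>auto\<close>)
  then show ?thesis using assms(3,4) by (auto elim!: goodL_cong)
qed



lemma rh1[simp]: "rh 1 = Eps" by (simp add: rh_def lbls_def)
lemma su1[simp]: "succs 1 = [3]" by (simp add: succs_def sl_def)
lemma rh2[simp]: "rh 2 = Eps" by (simp add: rh_def lbls_def)
lemma su2[simp]: "succs 2 = []" by (simp add: succs_def sl_def)
lemma rh3[simp]: "rh 3 = X 1" by (simp add: rh_def lbls_def)
lemma su3[simp]: "succs 3 = [4]" by (simp add: succs_def sl_def)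
lemma rh4[simp]: "rh 4 = Y 1" by (simp add: rh_def lbls_def)
lemma su4[simp]: "succs 4 = [5]" by (simp add: succs_def sl_def)
lemma rh5[simp]: "rh 5 = X 0" by (simp add: rh_def lbls_def)
lemma su5[simp]: "succs 5 = [6]" by (simp add: succs_def sl_def)
lemma rh6[simp]: "rh 6 = Eps" by (simp add: rh_def lbls_def)
lemma su6[simp]: "succs 6 = [7]" by (simp add: succs_def sl_def)
lemma rh7[simp]: "rh 7 = Xinv 0" by (simp add: rh_def lbls_def)
lemma su7[simp]: "succs 7 = [8]" by (simp add: succs_def sl_def)
lemma rh8[simp]: "rh 8 = Y 0" by (simp add: rh_def lbls_def)
lemma su8[simp]: "succs 8 = [9]" by (simp add: succs_def sl_def)
lemma rh9[simp]: "rh 9 = Eps" by (simp add: rh_def lbls_def)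
lemma su9[simp]: "succs 9 = [10]" by (simp add: succs_def sl_def)
lemma rh10[simp]: "rh 10 = Y 0" by (simp add: rh_def lbls_def)
lemma su10[simp]: "succs 10 = [7,11,15,18]" by (simp add: succs_def sl_def)
lemma rh11[simp]: "rh 11 = Xinv 1" by (simp add: rh_def lbls_def)
lemma su11[simp]: "succs 11 = [12]" by (simp add: succs_def sl_def)
lemma rh12[simp]: "rh 12 = Eps" by (simp add: rh_def lbls_def)
lemma su12[simp]: "succs 12 = [13]" by (simp add: succs_def sl_def)
lemma rh13[simp]: "rh 13 = Eps" by (simp add: rh_def lbls_def)
lemma su13[simp]: "succs 13 = [14]" by (simp add: succs_def sl_def)
lemma rh14[simp]: "rh 14 = X 1" by (simp add: rh_def lbls_def)
lemma su14[simp]: "succs 14 = [21,27]" by (simp add: succs_def sl_def)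
lemma rh15[simp]: "rh 15 = Xinv 1" by (simp add: rh_def lbls_def)
lemma su15[simp]: "succs 15 = [16]" by (simp add: succs_def sl_def)
lemma rh16[simp]: "rh 16 = Eps" by (simp add: rh_def lbls_def)
lemma su16[simp]: "succs 16 = [17]" by (simp add: succs_def sl_def)
lemma rh17[simp]: "rh 17 = X 2" by (simp add: rh_def lbls_def)
lemma su17[simp]: "succs 17 = [21]" by (simp add: succs_def sl_def)
lemma rh18[simp]: "rh 18 = Xinv 2" by (simp add: rh_def lbls_def)
lemma su18[simp]: "succs 18 = [19]" by (simp add: succs_def sl_def)
lemma rh19[simp]: "rh 19 = Eps" by (simp add: rh_def lbls_def)
lemma su19[simp]: "succs 19 = [20]" by (simp add: succs_def sl_def)
lemma rh20[simp]: "rh 20 = X 2" by (simp add: rh_def lbls_def)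
lemma su20[simp]: "succs 20 = [21,27]" by (simp add: succs_def sl_def)
lemma rh21[simp]: "rh 21 = Y 0" by (simp add: rh_def lbls_def)
lemma su21[simp]: "succs 21 = [22]" by (simp add: succs_def sl_def)
lemma rh22[simp]: "rh 22 = Eps" by (simp add: rh_def lbls_def)
lemma su22[simp]: "succs 22 = [23]" by (simp add: succs_def sl_def)
lemma rh23[simp]: "rh 23 = Eps" by (simp add: rh_def lbls_def)
lemma su23[simp]: "succs 23 = [24]" by (simp add: succs_def sl_def)
lemma rh24[simp]: "rh 24 = Eps" by (simp add: rh_def lbls_def)
lemma su24[simp]: "succs 24 = [25]" by (simp add: succs_def sl_def)
lemma rh25[simp]: "rh 25 = Eps" by (simp add: rh_def lbls_def)
lemma su25[simp]: "succs 25 = [26]" by (simp add: succs_def sl_def)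
lemma rh26[simp]: "rh 26 = Eps" by (simp add: rh_def lbls_def)
lemma su26[simp]: "succs 26 = [27]" by (simp add: succs_def sl_def)
lemma rh27[simp]: "rh 27 = Yinv 0" by (simp add: rh_def lbls_def)
lemma su27[simp]: "succs 27 = [28]" by (simp add: succs_def sl_def)
lemma rh28[simp]: "rh 28 = X 0" by (simp add: rh_def lbls_def)
lemma su28[simp]: "succs 28 = [27,29]" by (simp add: succs_def sl_def)
lemma rh29[simp]: "rh 29 = Yinv 1" by (simp add: rh_def lbls_def)
lemma su29[simp]: "succs 29 = [30]" by (simp add: succs_def sl_def)
lemma rh30[simp]: "rh 30 = Eps" by (simp add: rh_def lbls_def)
lemma su30[simp]: "succs 30 = [31]" by (simp add: succs_def sl_def)
lemma rh31[simp]: "rh 31 = Y 1" by (simp add: rh_def lbls_def)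
lemma su31[simp]: "succs 31 = [7,32,44]" by (simp add: succs_def sl_def)
lemma rh32[simp]: "rh 32 = Xinv 0" by (simp add: rh_def lbls_def)
lemma su32[simp]: "succs 32 = [33]" by (simp add: succs_def sl_def)
lemma rh33[simp]: "rh 33 = Eps" by (simp add: rh_def lbls_def)
lemma su33[simp]: "succs 33 = [34,36]" by (simp add: succs_def sl_def)
lemma rh34[simp]: "rh 34 = Xinv 0" by (simp add: rh_def lbls_def)
lemma su34[simp]: "succs 34 = [35]" by (simp add: succs_def sl_def)
lemma rh35[simp]: "rh 35 = Y 0" by (simp add: rh_def lbls_def)
lemma su35[simp]: "succs 35 = [34,36]" by (simp add: succs_def sl_def)
lemma rh36[simp]: "rh 36 = Xinv 2" by (simp add: rh_def lbls_def)
lemma su36[simp]: "succs 36 = [37]" by (simp add: succs_def sl_def)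
lemma rh37[simp]: "rh 37 = Eps" by (simp add: rh_def lbls_def)
lemma su37[simp]: "succs 37 = [38]" by (simp add: succs_def sl_def)
lemma rh38[simp]: "rh 38 = X 2" by (simp add: rh_def lbls_def)
lemma su38[simp]: "succs 38 = [39,41]" by (simp add: succs_def sl_def)
lemma rh39[simp]: "rh 39 = Yinv 0" by (simp add: rh_def lbls_def)
lemma su39[simp]: "succs 39 = [40]" by (simp add: succs_def sl_def)
lemma rh40[simp]: "rh 40 = X 0" by (simp add: rh_def lbls_def)
lemma su40[simp]: "succs 40 = [39,41]" by (simp add: succs_def sl_def)
lemma rh41[simp]: "rh 41 = Yinv 1" by (simp add: rh_def lbls_def)
lemma su41[simp]: "succs 41 = [42]" by (simp add: succs_def sl_def)
lemma rh42[simp]: "rh 42 = Eps" by (simp add: rh_def lbls_def)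
lemma su42[simp]: "succs 42 = [43]" by (simp add: succs_def sl_def)
lemma rh43[simp]: "rh 43 = Y 1" by (simp add: rh_def lbls_def)
lemma su43[simp]: "succs 43 = [32,44]" by (simp add: succs_def sl_def)
lemma rh44[simp]: "rh 44 = Xinv 2" by (simp add: rh_def lbls_def)
lemma su44[simp]: "succs 44 = [45]" by (simp add: succs_def sl_def)
lemma rh45[simp]: "rh 45 = Yinv 1" by (simp add: rh_def lbls_def)
lemma su45[simp]: "succs 45 = [2]" by (simp add: succs_def sl_def)

abbreviation St :: "int \<Rightarrow> nat \<Rightarrow> nat \<Rightarrow> (int list \<times> int list) option" where
  "St mx a b \<equiv> Some (mx # replicate a 0, 1 # replicate b 0)"

lemma butlast_rep: "butlast (replicate n x) = replicate (n - 1) x"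
  by (simp add: butlast_conv_take)

lemma rep_snoc: "replicate a x @ [x] = replicate (Suc a) x"
  by (simp add: replicate_append_same)

lemma bl_rep: "butlast (mx # replicate (Suc a) x) = mx # replicate a x"
proof -
  have "mx # replicate (Suc a) x = (mx # replicate a x) @ [x]" by (simp add: replicate_append_same)
  then show ?thesis by simp
qed

lemma bl_rep0: "butlast (replicate (Suc a) x) = replicate a x"
proof -
  have "replicate (Suc a) x = replicate a x @ [x]" by (simp add: replicate_append_same)
  then show ?thesis by simp
qed

lemma popx: "step (Xinv i) (Some (mx # replicate a 0, ys)) =
  (if 0 < a then (if i = 0 then Some (mx # replicate (a - 1) 0, ys) else None)
   else (if i = mx then Some ([], ys) else None))"
  by (cases a) (auto simp: bl_rep bl_rep0 simp del: replicate_Suc)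

lemma popy: "step (Yinv i) (Some (xs, 1 # replicate b 0)) =
  (if 0 < b then (if i = 0 then Some (xs, 1 # replicate (b - 1) 0) else None)
   else (if i = 1 then Some (xs, []) else None))"
  by (cases b) (auto simp: bl_rep bl_rep0 simp del: replicate_Suc)

lemma app0: "(m # replicate a (0::int)) @ [0] = m # replicate (Suc a) 0"
  by (simp add: replicate_append_same)

lemma rep1: "replicate 1 x = [x]" by simp

lemma rep1': "replicate (Suc 0) x = [x]" by simp

lemmas vf = popx popy rep_snoc goodL_None bl_rep0 rep1 rep1'


lemma goodL1':
  assumes "goodL w s' A N'" "succs v = [w]" "v \<in> {1..45}" "v \<noteq> 2" "step (rh w) s = s'" "N' = N - 1"
  shows "goodL v s (Suc ` A) N"
  using goodL1[of v w s A N] assms by simp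

lemma loopD: "mx \<noteq> 0 \<Longrightarrow> goodL 10 (Some ([mx], 1 # replicate (b + 2*a) 0)) A (N - 4*a) \<Longrightarrow>
   goodL 10 (St mx a b) ((+) (4*a) ` A) N"
proof (induction a arbitrary: b N)
  case 0 then show ?case by simp
next
  case (Suc a)
  have h: "goodL 10 (St mx a (Suc (Suc b))) ((+) (4*a) ` A) (N - 4)"
    using Suc.IH[of "Suc (Suc b)" "N - 4"] Suc.prems by (simp add: algebra_simps)
  have f9: "goodL 9 (St mx a (Suc b)) (Suc ` (+) (4*a) ` A) (N - 3)"
    by (rule goodL1'[OF h]) (simp_all add: vf del: replicate_Suc)
  have f8: "goodL 8 (St mx a (Suc b)) (Suc ` Suc ` (+) (4*a) ` A) (N - 2)"
    by (rule goodL1'[OF f9]) (simp_all add: vf del: replicate_Suc)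
  have f7: "goodL 7 (St mx a b) (Suc ` Suc ` Suc ` (+) (4*a) ` A) (N - 1)"
    by (rule goodL1'[OF f8]) (simp_all add: vf del: replicate_Suc)
  have "goodL 10 (St mx (Suc a) b) (Suc ` Suc ` Suc ` Suc ` (+) (4*a) ` A) N"
    by (rule goodL4) (simp add: vf f7[simplified One_nat_def] del: replicate_Suc)+
  then show ?case by (rule goodL_cong) (auto simp: image_image)
qed


lemma goodL4g:
  assumes "v \<in> {1..45}" "v \<noteq> 2" "succs v = [w1, w2, w3, w4]" "distinct [w1,w2,w3,w4]"
    "goodL w1 (step (rh w1) s) A1 (N - 1)" "goodL w2 (step (rh w2) s) A2 (N - 1)"
    "goodL w3 (step (rh w3) s) A3 (N - 1)" "goodL w4 (step (rh w4) s) A4 (N - 1)"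
    "A1 \<inter> A2 = {}" "A1 \<inter> A3 = {}" "A1 \<inter> A4 = {}" "A2 \<inter> A3 = {}" "A2 \<inter> A4 = {}" "A3 \<inter> A4 = {}"
  shows "goodL v s (Suc ` A1 \<union> Suc ` A2 \<union> Suc ` A3 \<union> Suc ` A4) N"
proof -
  have "goodL v s (\<Union>w\<in>set (succs v). Suc ` (if w = w1 then A1 else if w = w2 then A2 else if w = w3 then A3 else A4)) N"
    by (rule goodL_gen) (use assms in \<open>auto simp: Int_commute\<close>)
  then show ?thesis using assms(3,4) by (auto elim!: goodL_cong)
qed

lemma loopC1: "goodL 31 (St mx (a+b) 0) A (N - (2*b+3)) \<Longrightarrow> goodL 28 (St mx a b) ((+) (2*b+3) ` A) N"
proof (induction b arbitrary: a N)
  case 0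
  have h: "goodL 31 (St mx a 0) A (N - 3)" using 0 by simp
  have f30: "goodL 30 (Some (mx # replicate a 0, [])) (Suc ` A) (N - 2)"
    by (rule goodL1'[OF h]) (simp_all add: vf del: replicate_Suc)
  have f29: "goodL 29 (Some (mx # replicate a 0, [])) (Suc ` Suc ` A) (N - 1)"
    by (rule goodL1'[OF f30]) (simp_all add: vf del: replicate_Suc)
  have "goodL 28 (St mx a 0) (Suc ` {} \<union> Suc ` Suc ` Suc ` A) N"
    by (rule goodL2) (simp add: vf f29[simplified One_nat_def] del: replicate_Suc)+
  then show ?case by (rule goodL_cong) (auto simp: image_image)
next
  case (Suc b)
  have h: "goodL 28 (St mx (Suc a) b) ((+) (2*b+3) ` A) (N - 2)"
    using Suc.IH[of "Suc a" "N - 2"] Suc.prems by (simp add: algebra_simps)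
  have f27: "goodL 27 (St mx a b) (Suc ` (+) (2*b+3) ` A) (N - 1)"
    by (rule goodL1'[OF h]) (simp_all add: vf del: replicate_Suc)
  have "goodL 28 (St mx a (Suc b)) (Suc ` Suc ` (+) (2*b+3) ` A \<union> Suc ` {}) N"
    by (rule goodL2) (simp add: vf f27[simplified One_nat_def] del: replicate_Suc)+
  then show ?case by (rule goodL_cong) (auto simp: image_image)
qed

lemma loopC3: "v \<in> {38,40} \<Longrightarrow> goodL 43 (St mx (a+b) 0) A (N - (2*b+3)) \<Longrightarrow> goodL v (St mx a b) ((+) (2*b+3) ` A) N"
proof (induction b arbitrary: a N v)
  case 0
  have h: "goodL 43 (St mx a 0) A (N - 3)" using 0 by simp
  have f42: "goodL 42 (Some (mx # replicate a 0, [])) (Suc ` A) (N - 2)"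
    by (rule goodL1'[OF h]) (simp_all add: vf del: replicate_Suc)
  have f41: "goodL 41 (Some (mx # replicate a 0, [])) (Suc ` Suc ` A) (N - 1)"
    by (rule goodL1'[OF f42]) (simp_all add: vf del: replicate_Suc)
  have sv: "succs v = [39,41]" "Suc 0 \<le> v" "v \<le> 45" "v \<noteq> 2" using 0 by auto
  have "goodL v (St mx a 0) (Suc ` {} \<union> Suc ` Suc ` Suc ` A) N"
    by (rule goodL2) (simp add: sv vf f41[simplified One_nat_def] del: replicate_Suc)+
  then show ?case by (rule goodL_cong) (auto simp: image_image)
next
  case (Suc b)
  have h: "goodL 40 (St mx (Suc a) b) ((+) (2*b+3) ` A) (N - 2)"
    using Suc.IH[of 40 "Suc a" "N - 2"] Suc.prems by (simp add: algebra_simps)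
  have f39: "goodL 39 (St mx a b) (Suc ` (+) (2*b+3) ` A) (N - 1)"
    by (rule goodL1'[OF h]) (simp_all add: vf del: replicate_Suc)
  have sv: "succs v = [39,41]" "Suc 0 \<le> v" "v \<le> 45" "v \<noteq> 2" using Suc.prems by auto
  have "goodL v (St mx a (Suc b)) (Suc ` Suc ` (+) (2*b+3) ` A \<union> Suc ` {}) N"
    by (rule goodL2) (simp add: sv vf f39[simplified One_nat_def] del: replicate_Suc)+
  then show ?case by (rule goodL_cong) (auto simp: image_image)
qed



lemma loopC2: "v \<in> {33,35} \<Longrightarrow> goodL 38 (St 2 0 (a+b)) A (N - (2*a+3)) \<Longrightarrow> goodL v (St 2 a b) ((+) (2*a+3) ` A) N"
proof (induction a arbitrary: b N v)
  case 0
  have h: "goodL 38 (St 2 0 b) A (N - 3)" using 0 by simp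
  have f37: "goodL 37 (Some ([], 1 # replicate b 0)) (Suc ` A) (N - 2)"
    by (rule goodL1'[OF h]) (simp_all add: vf del: replicate_Suc)
  have f36: "goodL 36 (Some ([], 1 # replicate b 0)) (Suc ` Suc ` A) (N - 1)"
    by (rule goodL1'[OF f37]) (simp_all add: vf del: replicate_Suc)
  have sv: "succs v = [34,36]" "Suc 0 \<le> v" "v \<le> 45" "v \<noteq> 2" using 0 by auto
  have "goodL v (St 2 0 b) (Suc ` {} \<union> Suc ` Suc ` Suc ` A) N"
    by (rule goodL2) (insert f36, simp add: sv vf del: replicate_Suc)+
  then show ?case by (rule goodL_cong) (auto simp: image_image)
next
  case (Suc a)
  have h: "goodL 35 (St 2 a (Suc b)) ((+) (2*a+3) ` A) (N - 2)"
    using Suc.IH[of 35 "Suc b" "N - 2"] Suc.prems by (simp add: algebra_simps)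
  have f34: "goodL 34 (St 2 a b) (Suc ` (+) (2*a+3) ` A) (N - 1)"
    by (rule goodL1'[OF h]) (simp_all add: vf del: replicate_Suc)
  have sv: "succs v = [34,36]" "Suc 0 \<le> v" "v \<le> 45" "v \<noteq> 2" using Suc.prems by auto
  have "goodL v (St 2 (Suc a) b) (Suc ` Suc ` (+) (2*a+3) ` A \<union> Suc ` {}) N"
    by (rule goodL2) (insert f34, simp add: sv vf del: replicate_Suc)+
  then show ?case by (rule goodL_cong) (auto simp: image_image)
qed

lemma loopC2_1: "v \<in> {33,35} \<Longrightarrow> goodL v (St 1 a b) {} N"
proof (induction a arbitrary: b N v)
  case 0
  have sv: "succs v = [34,36]" "Suc 0 \<le> v" "v \<le> 45" "v \<noteq> 2" using 0 by auto
  have "goodL v (St 1 0 b) (Suc ` {} \<union> Suc ` {}) N"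
    by (rule goodL2) (simp add: sv vf del: replicate_Suc)+
  then show ?case by simp
next
  case (Suc a)
  have h: "goodL 35 (St 1 a (Suc b)) {} (N - 2)" using Suc.IH[of 35 "Suc b" "N - 2"] by (simp del: replicate_Suc)
  have f34: "goodL 34 (St 1 a b) (Suc ` {}) (N - 1)"
    by (rule goodL1'[OF h]) (simp_all add: vf del: replicate_Suc)
  have sv: "succs v = [34,36]" "Suc 0 \<le> v" "v \<le> 45" "v \<noteq> 2" using Suc.prems by auto
  have "goodL v (St 1 (Suc a) b) (Suc ` Suc ` {} \<union> Suc ` {}) N"
    by (rule goodL2) (insert f34, simp add: sv vf del: replicate_Suc)+
  then show ?case by simp
qed

lemma drain_step: "goodL 43 (St 2 r 0) A (N - (4*r+7)) \<Longrightarrow> goodL 32 (St 2 r 0) ((+) (4*r+7) ` A) N"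
proof -
  assume h: "goodL 43 (St 2 r 0) A (N - (4*r+7))"
  have f38: "goodL 38 (St 2 0 r) ((+) (2*r+3) ` A) (N - (2*r+4))"
    using loopC3[of 38 2 0 r A "N - (2*r+4)"] h by (simp add: algebra_simps)
  have f33: "goodL 33 (St 2 r 0) ((+) (2*r+3) ` (+) (2*r+3) ` A) (N - 1)"
    using loopC2[of 33 r 0 "(+) (2*r+3) ` A" "N - 1"] f38 by (simp add: algebra_simps)
  have "goodL 32 (St 2 r 0) (Suc ` (+) (2*r+3) ` (+) (2*r+3) ` A) N"
    by (rule goodL1'[OF f33]) (simp_all add: vf del: replicate_Suc)
  then show ?thesis by (rule goodL_cong) (auto simp: image_image)
qed

definition D :: "nat \<Rightarrow> nat" where "D r = 2*r*r + 6*r + 3"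

lemma drain43: "goodL 43 (St 2 r 0) {D r} N"
proof (induction r arbitrary: N)
  case 0
  have f2: "goodL 2 (Some ([],[])) {0} (N - 3)" by (rule goodL_end)
  have f45: "goodL 45 (Some ([],[])) (Suc ` {0}) (N - 2)"
    by (rule goodL1'[OF f2]) (simp_all add: vf del: replicate_Suc)
  have f44: "goodL 44 (Some ([],[1])) (Suc ` Suc ` {0}) (N - 1)"
    by (rule goodL1'[OF f45]) (simp_all add: vf del: replicate_Suc)
  have "goodL 43 (St 2 0 0) (Suc ` {} \<union> Suc ` Suc ` Suc ` {0}) N"
    by (rule goodL2) (insert f44, simp add: vf del: replicate_Suc)+
  then show ?case by (rule goodL_cong) (auto simp: D_def)
next
  case (Suc r)
  have f32: "goodL 32 (St 2 r 0) ((+) (4*r+7) ` {D r}) (N - 1)"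
    by (rule drain_step) (rule Suc.IH)
  have "goodL 43 (St 2 (Suc r) 0) (Suc ` (+) (4*r+7) ` {D r} \<union> Suc ` {}) N"
    by (rule goodL2) (insert f32, simp add: vf del: replicate_Suc)+
  then show ?case by (rule goodL_cong) (auto simp: D_def algebra_simps)
qed

lemma drain32_1: "goodL 32 (St 1 r 0) {} N"
proof -
  have "goodL 33 (St 1 r 0) {} (N - 1)" by (rule loopC2_1) simp
  then have "goodL 32 (St 1 r 0) (Suc ` {}) N"
    by (rule goodL1') (simp_all add: vf del: replicate_Suc)
  then show ?thesis by simp
qed



lemma rep2: "replicate 2 x = [x, x]" by (simp add: numeral_2_eq_2)

lemma shiftdisj: "(+) (a::nat) ` XX \<inter> (+) b ` YY = {} \<Longrightarrow> k \<le> a \<Longrightarrow> k \<le> b \<Longrightarrow> (+) (a - k) ` XX \<inter> (+) (b - k) ` YY = {}"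
proof (rule ccontr)
  assume h: "(+) a ` XX \<inter> (+) b ` YY = {}" "k \<le> a" "k \<le> b" "(+) (a - k) ` XX \<inter> (+) (b - k) ` YY \<noteq> {}"
  then obtain x y where "x \<in> XX" "y \<in> YY" "a - k + x = b - k + y" by auto
  then have "a + x = b + y" using h(2,3) by arith
  then show False using h(1) \<open>x \<in> XX\<close> \<open>y \<in> YY\<close> by (metis IntI empty_iff image_eqI)
qed

lemma from21: "goodL 31 (St mx (Suc b) 0) A (N - (2*b+10)) \<Longrightarrow> goodL 21 (St mx 0 (Suc b)) ((+) (2*b+10) ` A) N"
proof -
  assume h: "goodL 31 (St mx (Suc b) 0) A (N - (2*b+10))"
  have f28: "goodL 28 (St mx 1 b) ((+) (2*b+3) ` A) (N - 7)"
    using loopC1[of mx 1 b A "N - 7"] h by (simp add: algebra_simps)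
  have f27: "goodL 27 (St mx 0 b) (Suc ` (+) (2*b+3) ` A) (N - 6)"
    by (rule goodL1'[OF f28]) (simp_all add: vf del: replicate_Suc)
  have f26: "goodL 26 (St mx 0 (Suc b)) (Suc ` Suc ` (+) (2*b+3) ` A) (N - 5)"
    by (rule goodL1'[OF f27]) (simp_all add: vf del: replicate_Suc)
  have f25: "goodL 25 (St mx 0 (Suc b)) (Suc ` Suc ` Suc ` (+) (2*b+3) ` A) (N - 4)"
    by (rule goodL1'[OF f26]) (simp_all add: vf del: replicate_Suc)
  have f24: "goodL 24 (St mx 0 (Suc b)) (Suc ` Suc ` Suc ` Suc ` (+) (2*b+3) ` A) (N - 3)"
    by (rule goodL1'[OF f25]) (simp_all add: vf del: replicate_Suc)
  have f23: "goodL 23 (St mx 0 (Suc b)) (Suc ` Suc ` Suc ` Suc ` Suc ` (+) (2*b+3) ` A) (N - 2)"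
    by (rule goodL1'[OF f24]) (simp_all add: vf del: replicate_Suc)
  have f22: "goodL 22 (St mx 0 (Suc b)) (Suc ` Suc ` Suc ` Suc ` Suc ` Suc ` (+) (2*b+3) ` A) (N - 1)"
    by (rule goodL1'[OF f23]) (simp_all add: vf del: replicate_Suc)
  have "goodL 21 (St mx 0 (Suc b)) (Suc ` Suc ` Suc ` Suc ` Suc ` Suc ` Suc ` (+) (2*b+3) ` A) N"
    by (rule goodL1'[OF f22]) (simp_all add: vf del: replicate_Suc)
  then show ?thesis by (rule goodL_cong) (auto simp: image_image)
qed

lemma from27: "goodL 31 (St mx (Suc b) 0) A (N - (2*b+4)) \<Longrightarrow> goodL 27 (St mx 0 b) ((+) (2*b+4) ` A) N"
proof -
  assume h: "goodL 31 (St mx (Suc b) 0) A (N - (2*b+4))"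
  have f28: "goodL 28 (St mx 1 b) ((+) (2*b+3) ` A) (N - 1)"
    using loopC1[of mx 1 b A "N - 1"] h by (simp add: algebra_simps)
  have "goodL 27 (St mx 0 b) (Suc ` (+) (2*b+3) ` A) N"
    by (rule goodL1'[OF f28]) (simp_all add: vf del: replicate_Suc)
  then show ?thesis by (rule goodL_cong) (auto simp: image_image)
qed

lemma bitv:
  assumes v: "v \<in> {14,20}"
    and h0: "goodL 31 (St mx (Suc b) 0) A0 (N - (2*b+5))"
    and h1: "goodL 31 (St mx (Suc (Suc b)) 0) A1 (N - (2*b+13))"
    and disj: "(+) (2*b+5) ` A0 \<inter> (+) (2*b+13) ` A1 = {}"
  shows "goodL v (St mx 0 (Suc b)) ((+) (2*b+5) ` A0 \<union> (+) (2*b+13) ` A1) N"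
proof -
  have f21: "goodL 21 (St mx 0 (Suc (Suc b))) ((+) (2*b+12) ` A1) (N - 1)"
    using from21[of mx "Suc b" A1 "N - 1"] h1 by (simp add: algebra_simps)
  have f27: "goodL 27 (St mx 0 b) ((+) (2*b+4) ` A0) (N - 1)"
    using from27[of mx b A0 "N - 1"] h0 by (simp add: algebra_simps)
  have d: "(+) (2*b+12) ` A1 \<inter> (+) (2*b+4) ` A0 = {}"
    using shiftdisj[OF disj, of 1] by (auto simp: Int_commute)
  have sv: "succs v = [21,27]" "Suc 0 \<le> v" "v \<le> 45" "v \<noteq> 2" using v by auto
  have "goodL v (St mx 0 (Suc b)) (Suc ` (+) (2*b+12) ` A1 \<union> Suc ` (+) (2*b+4) ` A0) N"
    by (rule goodL2) (insert f21 f27 d, simp add: sv vf del: replicate_Suc)+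
  then show ?thesis by (rule goodL_cong) (auto simp: image_image)
qed

lemma sel17: "goodL 31 (St 2 (Suc (Suc b)) 0) A1 (N - (2*b+13)) \<Longrightarrow> goodL 17 (St 2 0 (Suc b)) ((+) (2*b+13) ` A1) N"
proof -
  assume h1: "goodL 31 (St 2 (Suc (Suc b)) 0) A1 (N - (2*b+13))"
  have f21: "goodL 21 (St 2 0 (Suc (Suc b))) ((+) (2*b+12) ` A1) (N - 1)"
    using from21[of 2 "Suc b" A1 "N - 1"] h1 by (simp add: algebra_simps)
  have "goodL 17 (St 2 0 (Suc b)) (Suc ` (+) (2*b+12) ` A1) N"
    by (rule goodL1'[OF f21]) (simp_all add: vf del: replicate_Suc)
  then show ?thesis by (rule goodL_cong) (auto simp: image_image)
qed

lemma exit2: "goodL 20 (St 2 0 (Suc b)) B (N - 3) \<Longrightarrow> goodL 10 (St 2 0 (Suc b)) ((+) 3 ` B) N"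
proof -
  assume h: "goodL 20 (St 2 0 (Suc b)) B (N - 3)"
  have f19: "goodL 19 (Some ([], 1 # replicate (Suc b) 0)) (Suc ` B) (N - 2)"
    by (rule goodL1'[OF h]) (simp_all add: vf del: replicate_Suc)
  have f18: "goodL 18 (Some ([], 1 # replicate (Suc b) 0)) (Suc ` Suc ` B) (N - 1)"
    by (rule goodL1'[OF f19]) (simp_all add: vf del: replicate_Suc)
  have "goodL 10 (St 2 0 (Suc b)) (Suc ` {} \<union> Suc ` {} \<union> Suc ` {} \<union> Suc ` Suc ` Suc ` B) N"
    by (rule goodL4g) (insert f18, simp add: vf del: replicate_Suc)+
  then show ?thesis by (rule goodL_cong) (auto simp: image_image)
qed

lemma exit1: "goodL 14 (St 1 0 (Suc b)) B (N - 4) \<Longrightarrow> goodL 17 (St 2 0 (Suc b)) C (N - 3) \<Longrightarrow>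
  (+) 4 ` B \<inter> (+) 3 ` C = {} \<Longrightarrow> goodL 10 (St 1 0 (Suc b)) ((+) 4 ` B \<union> (+) 3 ` C) N"
proof -
  assume h: "goodL 14 (St 1 0 (Suc b)) B (N - 4)" and hc: "goodL 17 (St 2 0 (Suc b)) C (N - 3)"
    and disj: "(+) 4 ` B \<inter> (+) 3 ` C = {}"
  have f13: "goodL 13 (Some ([], 1 # replicate (Suc b) 0)) (Suc ` B) (N - 3)"
    by (rule goodL1'[OF h]) (simp_all add: vf del: replicate_Suc)
  have f12: "goodL 12 (Some ([], 1 # replicate (Suc b) 0)) (Suc ` Suc ` B) (N - 2)"
    by (rule goodL1'[OF f13]) (simp_all add: vf del: replicate_Suc)
  have f11: "goodL 11 (Some ([], 1 # replicate (Suc b) 0)) (Suc ` Suc ` Suc ` B) (N - 1)"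
    by (rule goodL1'[OF f12]) (simp_all add: vf del: replicate_Suc)
  have f16: "goodL 16 (Some ([], 1 # replicate (Suc b) 0)) (Suc ` C) (N - 2)"
    by (rule goodL1'[OF hc]) (simp_all add: vf del: replicate_Suc)
  have f15: "goodL 15 (Some ([], 1 # replicate (Suc b) 0)) (Suc ` Suc ` C) (N - 1)"
    by (rule goodL1'[OF f16]) (simp_all add: vf del: replicate_Suc)
  have d: "Suc ` Suc ` Suc ` B \<inter> Suc ` Suc ` C = {}"
  proof (rule ccontr)
    assume "Suc ` Suc ` Suc ` B \<inter> Suc ` Suc ` C \<noteq> {}"
    then obtain x y where "x \<in> B" "y \<in> C" "Suc (Suc (Suc x)) = Suc (Suc y)" by auto
    then have "4 + x \<in> (+) 4 ` B \<inter> (+) 3 ` C" by (auto intro!: image_eqI[of _ _ y])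
    then show False using disj by blast
  qed
  have "goodL 10 (St 1 0 (Suc b)) (Suc ` {} \<union> Suc ` Suc ` Suc ` Suc ` B \<union> Suc ` Suc ` Suc ` C \<union> Suc ` {}) N"
    by (rule goodL4g) (insert f11 f15 d, simp add: vf del: replicate_Suc)+
  then show ?thesis by (rule goodL_cong) (auto simp: image_image)
qed



lemma round2:
  assumes h0: "goodL 31 (St 2 (Suc (Suc (2*c))) 0) A0 (N - (8*c+13))"
    and h1: "goodL 31 (St 2 (Suc (Suc (Suc (2*c)))) 0) A1 (N - (8*c+21))"
    and disj: "(+) (8*c+13) ` A0 \<inter> (+) (8*c+21) ` A1 = {}"
  shows "goodL 7 (St 2 c 0) ((+) (8*c+13) ` A0 \<union> (+) (8*c+21) ` A1) N"
proof -
  have d: "(+) (4*c+7) ` A0 \<inter> (+) (4*c+15) ` A1 = {}"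
    using shiftdisj[OF disj, of "4*c+6"] by (simp add: algebra_simps)
  have f20: "goodL 20 (St 2 0 (Suc (Suc (2*c)))) ((+) (4*c+7) ` A0 \<union> (+) (4*c+15) ` A1) (N - (4*c+6))"
    using bitv[of 20 2 "Suc (2*c)" A0 "N - (4*c+6)" A1] h0 h1 d by (simp add: algebra_simps)
  have f10e: "goodL 10 (St 2 0 (Suc (Suc (2*c)))) ((+) 3 ` ((+) (4*c+7) ` A0 \<union> (+) (4*c+15) ` A1)) (N - (4*c+3))"
    using exit2[of "Suc (2*c)" _ "N - (4*c+3)"] f20 by (simp add: algebra_simps)
  have f10: "goodL 10 (St 2 c 2) ((+) (4*c) ` (+) 3 ` ((+) (4*c+7) ` A0 \<union> (+) (4*c+15) ` A1)) (N - 3)"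
    using loopD[of 2 2 c _ "N - 3"] f10e by (simp add: algebra_simps)
  have f9: "goodL 9 (St 2 c 1) (Suc ` (+) (4*c) ` (+) 3 ` ((+) (4*c+7) ` A0 \<union> (+) (4*c+15) ` A1)) (N - 2)"
    by (rule goodL1'[OF f10]) (simp_all add: vf rep2 del: replicate_Suc)
  have f8: "goodL 8 (St 2 c 1) (Suc ` Suc ` (+) (4*c) ` (+) 3 ` ((+) (4*c+7) ` A0 \<union> (+) (4*c+15) ` A1)) (N - 1)"
    by (rule goodL1'[OF f9]) (simp_all add: vf rep2 del: replicate_Suc)
  have "goodL 7 (St 2 c 0) (Suc ` Suc ` Suc ` (+) (4*c) ` (+) 3 ` ((+) (4*c+7) ` A0 \<union> (+) (4*c+15) ` A1)) N"
    by (rule goodL1'[OF f8]) (simp_all add: vf rep2 del: replicate_Suc)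
  then show ?thesis by (rule goodL_cong) (auto simp: image_image image_Un algebra_simps)
qed


lemma round1:
  assumes h0: "goodL 31 (St 1 (Suc (Suc (2*c))) 0) A0 (N - (8*c+14))"
    and h1: "goodL 31 (St 1 (Suc (Suc (Suc (2*c)))) 0) A1 (N - (8*c+22))"
    and hs: "goodL 31 (St 2 (Suc (Suc (Suc (2*c)))) 0) AS (N - (8*c+21))"
    and d01: "(+) (8*c+14) ` A0 \<inter> (+) (8*c+22) ` A1 = {}"
    and d0s: "(+) (8*c+14) ` A0 \<inter> (+) (8*c+21) ` AS = {}"
    and d1s: "(+) (8*c+22) ` A1 \<inter> (+) (8*c+21) ` AS = {}"
  shows "goodL 7 (St 1 c 0) ((+) (8*c+14) ` A0 \<union> (+) (8*c+22) ` A1 \<union> (+) (8*c+21) ` AS) N"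
proof -
  have d: "(+) (4*c+7) ` A0 \<inter> (+) (4*c+15) ` A1 = {}"
    using shiftdisj[OF d01, of "4*c+7"] by (simp add: algebra_simps)
  have f14: "goodL 14 (St 1 0 (Suc (Suc (2*c)))) ((+) (4*c+7) ` A0 \<union> (+) (4*c+15) ` A1) (N - (4*c+7))"
    using bitv[of 14 1 "Suc (2*c)" A0 "N - (4*c+7)" A1] h0 h1 d by (simp add: algebra_simps)
  have f17: "goodL 17 (St 2 0 (Suc (Suc (2*c)))) ((+) (4*c+15) ` AS) (N - (4*c+6))"
    using sel17[of "Suc (2*c)" AS "N - (4*c+6)"] hs by (simp add: algebra_simps)
  have dd: "(+) 4 ` ((+) (4*c+7) ` A0 \<union> (+) (4*c+15) ` A1) \<inter> (+) 3 ` ((+) (4*c+15) ` AS) = {}"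
  proof -
    have a: "(+) (4*c+11) ` A0 \<inter> (+) (4*c+18) ` AS = {}"
      using shiftdisj[OF d0s, of "4*c+3"] by (simp add: algebra_simps)
    have b: "(+) (4*c+19) ` A1 \<inter> (+) (4*c+18) ` AS = {}"
      using shiftdisj[OF d1s, of "4*c+3"] by (simp add: algebra_simps)
    show ?thesis using a b by (auto simp: image_image image_Un algebra_simps)
  qed
  have f10e: "goodL 10 (St 1 0 (Suc (Suc (2*c)))) ((+) 4 ` ((+) (4*c+7) ` A0 \<union> (+) (4*c+15) ` A1) \<union> (+) 3 ` ((+) (4*c+15) ` AS)) (N - (4*c+3))"
    using exit1[of "Suc (2*c)" _ "N - (4*c+3)"] f14 f17 dd by (simp add: algebra_simps)
  have f10: "goodL 10 (St 1 c 2) ((+) (4*c) ` ((+) 4 ` ((+) (4*c+7) ` A0 \<union> (+) (4*c+15) ` A1) \<union> (+) 3 ` ((+) (4*c+15) ` AS))) (N - 3)"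
    using loopD[of 1 2 c _ "N - 3"] f10e by (simp add: algebra_simps)
  have f9: "goodL 9 (St 1 c 1) (Suc ` (+) (4*c) ` ((+) 4 ` ((+) (4*c+7) ` A0 \<union> (+) (4*c+15) ` A1) \<union> (+) 3 ` ((+) (4*c+15) ` AS))) (N - 2)"
    by (rule goodL1'[OF f10]) (simp_all add: vf rep2 del: replicate_Suc)
  have f8: "goodL 8 (St 1 c 1) (Suc ` Suc ` (+) (4*c) ` ((+) 4 ` ((+) (4*c+7) ` A0 \<union> (+) (4*c+15) ` A1) \<union> (+) 3 ` ((+) (4*c+15) ` AS))) (N - 1)"
    by (rule goodL1'[OF f9]) (simp_all add: vf rep2 del: replicate_Suc)
  have "goodL 7 (St 1 c 0) (Suc ` Suc ` Suc ` (+) (4*c) ` ((+) 4 ` ((+) (4*c+7) ` A0 \<union> (+) (4*c+15) ` A1) \<union> (+) 3 ` ((+) (4*c+15) ` AS))) N"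
    by (rule goodL1'[OF f8]) (simp_all add: vf rep2 del: replicate_Suc)
  then show ?thesis by (rule goodL_cong) (auto simp: image_image image_Un algebra_simps)
qed



definition Q :: "nat \<Rightarrow> nat \<Rightarrow> nat" where "Q V l = 2*V*V + 14*V + 6*l + 3"
definition R2 :: "nat \<Rightarrow> nat set" where "R2 c = {n. \<exists>V l. V div 2^l = c \<and> n + 8*c = Q V l}"
definition R1 :: "nat \<Rightarrow> nat set" where
  "R1 c = {n. \<exists>V l j. V div 2^l = c \<and> j < l \<and> odd (V div 2^(l - Suc j)) \<and> n + 8*c = Q V l + j}"

lemma pow7a: "7 * l + 9 \<le> 4 * 2^l + (16::nat)"
proof (induction l)
  case 0 then show ?case by simp
next
  case (Suc l)
  have "l = 0 \<or> (2::nat) \<le> 2^l"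
    by (metis One_nat_def Suc_leI neq0_conv one_less_power power_one_right self_le_power zero_less_numeral)
  then show ?case using Suc by auto
qed

lemma pow7: "7 * l < 4 * 2^l + (16::nat)"
  using pow7a[of l] by simp

lemma le_of_div: "V div 2^l = c \<Longrightarrow> 0 < c \<Longrightarrow> 2^l \<le> (V::nat)"
  by (metis div_greater_zero_iff)

lemma ge_of_div: "V div 2^l = c \<Longrightarrow> c \<le> (V::nat)"
  by (metis div_le_dividend)

lemma Qlt: assumes "2^l \<le> V" "j \<le> l" "V < V'" shows "Q V l + j < Q V' l' + j'"
proof -
  have a: "7*l < 4*V + 16" using pow7[of l] assms(1) by linarith
  have b: "(V+1)*(V+1) \<le> V'*V'" using assms(3) mult_le_mono[of "V+1" V' "V+1" V'] by simp
  have "Q V l + j \<le> 2*V*V + 14*V + 7*l + 3" unfolding Q_def using assms(2) by simp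
  also have "\<dots> < 2*(V+1)*(V+1) + 14*(V+1) + 3" using a by (simp add: algebra_simps)
  also have "\<dots> \<le> 2*V'*V' + 14*V' + 3" using b assms(3) by (simp add: algebra_simps)
  also have "\<dots> \<le> Q V' l' + j'" unfolding Q_def by simp
  finally show ?thesis .
qed

lemma div_pow_sub: "(V::nat) div 2^l' = V div 2^l div 2^(l' - l)" if "l \<le> l'"
proof -
  have "(2::nat)^l' = 2^l * 2^(l'-l)" using that by (simp add: power_add[symmetric])
  then show ?thesis by (simp add: div_mult2_eq)
qed

lemma divl: assumes "(V::nat) div 2^l = c" "V div 2^l' = c" "0 < c" shows "l = l'"
proof (rule ccontr)
  assume ne: "l \<noteq> l'"
  have gen: "\<And>a b. a < b \<Longrightarrow> V div 2^a = c \<Longrightarrow> V div 2^b = c \<Longrightarrow> False"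
  proof -
    fix a b assume ab: "a < b" "V div 2^a = c" "V div 2^b = c"
    have "V div 2^b = c div 2^(b - a)" using div_pow_sub[of a b V] ab by simp
    also have "\<dots> < c"
    proof (rule div_less_dividend)
      show "1 < (2::nat) ^ (b - a)" using ab(1) one_less_power[of "2::nat" "b - a"] by simp
    qed (use assms(3) in simp)
    finally show False using ab by simp
  qed
  show False using ne assms gen by (metis linorder_neqE_nat)
qed

lemma keyinj:
  assumes "0 < c" "V div 2^l = c" "V' div 2^l' = c" "j \<le> l" "j' \<le> l'" "Q V l + j = Q V' l' + j'"
  shows "V = V' \<and> l = l' \<and> j = j'"
proof -
  have "V = V'"
  proof (rule ccontr)
    assume "V \<noteq> V'"
    then consider "V < V'" | "V' < V" by linarith
    then show False
    proof cases
      case 1 then show ?thesis using Qlt[of l V j V' l' j'] assms le_of_div by fastforce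
    next
      case 2 then show ?thesis using Qlt[of l' V' j' V l j] assms le_of_div by fastforce
    qed
  qed
  moreover have "l = l'" using divl assms \<open>V = V'\<close> by blast
  moreover have "j = j'" using assms(6) \<open>V = V'\<close> \<open>l = l'\<close> by simp
  ultimately show ?thesis by simp
qed

lemma Q_Suc: "Q V (Suc l) = Q V l + 6" by (simp add: Q_def)

lemma div_Suc: "(V::nat) div 2^(Suc l) = V div 2^l div 2"
  by (metis div_mult2_eq power_Suc2)


lemma div_Suc': "(V::nat) div (2 * 2^l) = V div 2^l div 2"
  using div_Suc[of V l] by simp

lemma Q_ge: "c \<le> V \<Longrightarrow> 8*c \<le> Q V l" unfolding Q_def by simp

lemma memsh2: "n \<in> (+) k ` R2 d \<longleftrightarrow> (\<exists>V l. V div 2^l = d \<and> n + 8*d = Q V l + k)"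
proof
  assume "n \<in> (+) k ` R2 d"
  then obtain m V l where "n = k + m" "V div 2^l = d" "m + 8*d = Q V l" by (auto simp: R2_def)
  then show "\<exists>V l. V div 2^l = d \<and> n + 8*d = Q V l + k" by auto
next
  assume "\<exists>V l. V div 2^l = d \<and> n + 8*d = Q V l + k"
  then obtain V l where h: "V div 2^l = d" "n + 8*d = Q V l + k" by auto
  have "8*d \<le> Q V l" using Q_ge ge_of_div[OF h(1)] by blast
  then have "n - k \<in> R2 d" "n = k + (n - k)" using h by (auto simp: R2_def)
  then show "n \<in> (+) k ` R2 d" by (metis image_eqI)
qed

lemma memsh1: "n \<in> (+) k ` R1 d \<longleftrightarrow>
   (\<exists>V l j. V div 2^l = d \<and> j < l \<and> odd (V div 2^(l - Suc j)) \<and> n + 8*d = Q V l + j + k)"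
proof
  assume "n \<in> (+) k ` R1 d"
  then obtain m V l j where "n = k + m" "V div 2^l = d" "j < l" "odd (V div 2^(l - Suc j))" "m + 8*d = Q V l + j"
    by (auto simp: R1_def)
  then show "\<exists>V l j. V div 2^l = d \<and> j < l \<and> odd (V div 2^(l - Suc j)) \<and> n + 8*d = Q V l + j + k"
    by (intro exI[of _ V] exI[of _ l] exI[of _ j]) auto
next
  assume "\<exists>V l j. V div 2^l = d \<and> j < l \<and> odd (V div 2^(l - Suc j)) \<and> n + 8*d = Q V l + j + k"
  then obtain V l j where h: "V div 2^l = d" "j < l" "odd (V div 2^(l - Suc j))" "n + 8*d = Q V l + j + k" by auto
  have "8*d \<le> Q V l" using Q_ge ge_of_div[OF h(1)] by blast
  then have "n - k \<in> R1 d" "n = k + (n - k)" using h unfolding R1_def by auto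
  then show "n \<in> (+) k ` R1 d" by (metis image_eqI)
qed

lemma memR2: "n \<in> R2 d \<longleftrightarrow> (\<exists>V l. V div 2^l = d \<and> n + 8*d = Q V l)"
  by (simp add: R2_def)

lemma memR1: "n \<in> R1 d \<longleftrightarrow> (\<exists>V l j. V div 2^l = d \<and> j < l \<and> odd (V div 2^(l - Suc j)) \<and> n + 8*d = Q V l + j)"
  by (simp add: R1_def)

lemma div2cases: "(d::nat) div 2 = Suc c \<Longrightarrow> d = Suc (Suc (2*c)) \<or> d = Suc (Suc (Suc (2*c)))"
  by presburger

lemma E2: "R2 (Suc c) = (+) (8*c+14) ` R2 (Suc (Suc (2*c))) \<union> (+) (8*c+22) ` R2 (Suc (Suc (Suc (2*c)))) \<union> {2*c*c+10*c+11}"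
proof (intro set_eqI iffI)
  fix n assume "n \<in> R2 (Suc c)"
  then obtain V l where h: "V div 2^l = Suc c" "n + 8*Suc c = Q V l" by (auto simp: R2_def)
  show "n \<in> (+) (8*c+14) ` R2 (Suc (Suc (2*c))) \<union> (+) (8*c+22) ` R2 (Suc (Suc (Suc (2*c)))) \<union> {2*c*c+10*c+11}"
  proof (cases l)
    case 0
    then have "V = Suc c" using h by simp
    then have "n = 2*c*c+10*c+11" using h 0 by (simp add: Q_def algebra_simps)
    then show ?thesis by simp
  next
    case (Suc l')
    let ?d = "V div 2^l'"
    have dd: "?d div 2 = Suc c" using h(1) Suc by (simp add: div_Suc')
    have e: "n + 8*c + 2 = Q V l'" using h(2) Suc by (simp add: Q_Suc)
    from div2cases[OF dd] show ?thesis
    proof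
      assume "?d = Suc (Suc (2*c))"
      then have "n \<in> (+) (8*c+14) ` R2 (Suc (Suc (2*c)))" unfolding memsh2 using e by (intro exI[of _ V] exI[of _ l']) auto
      then show ?thesis by simp
    next
      assume "?d = Suc (Suc (Suc (2*c)))"
      then have "n \<in> (+) (8*c+22) ` R2 (Suc (Suc (Suc (2*c))))" unfolding memsh2 using e by (intro exI[of _ V] exI[of _ l']) auto
      then show ?thesis by simp
    qed
  qed
next
  fix n assume "n \<in> (+) (8*c+14) ` R2 (Suc (Suc (2*c))) \<union> (+) (8*c+22) ` R2 (Suc (Suc (Suc (2*c)))) \<union> {2*c*c+10*c+11}"
  then consider "n \<in> (+) (8*c+14) ` R2 (Suc (Suc (2*c)))" | "n \<in> (+) (8*c+22) ` R2 (Suc (Suc (Suc (2*c))))" | "n = 2*c*c+10*c+11"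
    by auto
  then show "n \<in> R2 (Suc c)"
  proof cases
    case 1
    then obtain V l where h: "V div 2^l = Suc (Suc (2*c))" "n + 8*Suc (Suc (2*c)) = Q V l + (8*c+14)" unfolding memsh2 by blast
    have "V div 2^(Suc l) = Suc c" using h(1) by (simp add: div_Suc')
    moreover have "n + 8*Suc c = Q V (Suc l)" using h(2) by (simp add: Q_Suc)
    ultimately show ?thesis unfolding memR2 by blast
  next
    case 2
    then obtain V l where h: "V div 2^l = Suc (Suc (Suc (2*c)))" "n + 8*Suc (Suc (Suc (2*c))) = Q V l + (8*c+22)" unfolding memsh2 by blast
    have "V div 2^(Suc l) = Suc c" using h(1) by (simp add: div_Suc')
    moreover have "n + 8*Suc c = Q V (Suc l)" using h(2) by (simp add: Q_Suc)
    ultimately show ?thesis unfolding memR2 by blast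
  next
    case 3
    have "Suc c div 2^0 = Suc c" by simp
    moreover have "n + 8*Suc c = Q (Suc c) 0" using 3 by (simp add: Q_def algebra_simps)
    ultimately show ?thesis unfolding memR2 by blast
  qed
qed


lemma E1: "R1 (Suc c) = (+) (8*c+15) ` R1 (Suc (Suc (2*c))) \<union> (+) (8*c+23) ` R1 (Suc (Suc (Suc (2*c)))) \<union> (+) (8*c+22) ` R2 (Suc (Suc (Suc (2*c))))"
proof (intro set_eqI iffI)
  fix n assume "n \<in> R1 (Suc c)"
  then obtain V l j where h: "V div 2^l = Suc c" "j < l" "odd (V div 2^(l - Suc j))" "n + 8*Suc c = Q V l + j"
    by (auto simp: R1_def)
  obtain l' where l': "l = Suc l'" using h(2) by (cases l) auto
  let ?d = "V div 2^l'"
  have dd: "?d div 2 = Suc c" using h(1) l' by (simp add: div_Suc')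
  show "n \<in> (+) (8*c+15) ` R1 (Suc (Suc (2*c))) \<union> (+) (8*c+23) ` R1 (Suc (Suc (Suc (2*c)))) \<union> (+) (8*c+22) ` R2 (Suc (Suc (Suc (2*c))))"
  proof (cases j)
    case 0
    have od: "odd ?d" using h(3) 0 l' by simp
    have "?d = Suc (Suc (Suc (2*c)))" using div2cases[OF dd] od by auto
    moreover have "n + 8*c + 2 = Q V l'" using h(4) 0 l' by (simp add: Q_Suc)
    ultimately have "n \<in> (+) (8*c+22) ` R2 (Suc (Suc (Suc (2*c))))" unfolding memsh2
      by (intro exI[of _ V] exI[of _ l']) auto
    then show ?thesis by simp
  next
    case (Suc j')
    have j': "j' < l'" "odd (V div 2^(l' - Suc j'))" using h(2,3) Suc l' by auto
    have e: "n + 8*c + 1 = Q V l' + j'" using h(4) Suc l' by (simp add: Q_Suc)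
    from div2cases[OF dd] show ?thesis
    proof
      assume "?d = Suc (Suc (2*c))"
      then have "n \<in> (+) (8*c+15) ` R1 (Suc (Suc (2*c)))" unfolding memsh1 using e j'
        by (intro exI[of _ V] exI[of _ l'] exI[of _ j']) auto
      then show ?thesis by simp
    next
      assume "?d = Suc (Suc (Suc (2*c)))"
      then have "n \<in> (+) (8*c+23) ` R1 (Suc (Suc (Suc (2*c))))" unfolding memsh1 using e j'
        by (intro exI[of _ V] exI[of _ l'] exI[of _ j']) auto
      then show ?thesis by simp
    qed
  qed
next
  fix n assume "n \<in> (+) (8*c+15) ` R1 (Suc (Suc (2*c))) \<union> (+) (8*c+23) ` R1 (Suc (Suc (Suc (2*c)))) \<union> (+) (8*c+22) ` R2 (Suc (Suc (Suc (2*c))))"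
  then consider "n \<in> (+) (8*c+15) ` R1 (Suc (Suc (2*c)))" | "n \<in> (+) (8*c+23) ` R1 (Suc (Suc (Suc (2*c))))"
    | "n \<in> (+) (8*c+22) ` R2 (Suc (Suc (Suc (2*c))))" by auto
  then show "n \<in> R1 (Suc c)"
  proof cases
    case 1
    then obtain V l j where h: "V div 2^l = Suc (Suc (2*c))" "j < l" "odd (V div 2^(l - Suc j))"
      "n + 8*Suc (Suc (2*c)) = Q V l + j + (8*c+15)" unfolding memsh1 by blast
    have "V div 2^(Suc l) = Suc c" using h(1) by (simp add: div_Suc')
    moreover have "n + 8*Suc c = Q V (Suc l) + Suc j" using h(4) by (simp add: Q_Suc)
    moreover have "odd (V div 2^(Suc l - Suc (Suc j)))" using h(3) by simp
    ultimately show ?thesis unfolding memR1 using h(2) by (intro exI[of _ V] exI[of _ "Suc l"] exI[of _ "Suc j"]) auto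
  next
    case 2
    then obtain V l j where h: "V div 2^l = Suc (Suc (Suc (2*c)))" "j < l" "odd (V div 2^(l - Suc j))"
      "n + 8*Suc (Suc (Suc (2*c))) = Q V l + j + (8*c+23)" unfolding memsh1 by blast
    have "V div 2^(Suc l) = Suc c" using h(1) by (simp add: div_Suc')
    moreover have "n + 8*Suc c = Q V (Suc l) + Suc j" using h(4) by (simp add: Q_Suc)
    moreover have "odd (V div 2^(Suc l - Suc (Suc j)))" using h(3) by simp
    ultimately show ?thesis unfolding memR1 using h(2) by (intro exI[of _ V] exI[of _ "Suc l"] exI[of _ "Suc j"]) auto
  next
    case 3
    then obtain V l where h: "V div 2^l = Suc (Suc (Suc (2*c)))" "n + 8*Suc (Suc (Suc (2*c))) = Q V l + (8*c+22)"
      unfolding memsh2 by blast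
    have "V div 2^(Suc l) = Suc c" using h(1) by (simp add: div_Suc')
    moreover have "n + 8*Suc c = Q V (Suc l) + 0" using h(2) by (simp add: Q_Suc)
    moreover have "odd (V div 2^(Suc l - Suc 0))" using h(1) by simp
    ultimately show ?thesis unfolding memR1 by (intro exI[of _ V] exI[of _ "Suc l"] exI[of _ 0]) auto
  qed
qed


lemma D2a: "n \<in> (+) (8*c+14) ` R2 (Suc (Suc (2*c))) \<Longrightarrow> \<exists>V l. V div 2^Suc l = Suc c \<and> V div 2^l = Suc (Suc (2*c)) \<and> n + 8*Suc c = Q V (Suc l)"
  unfolding memsh2 apply (elim exE conjE)
  subgoal for V l by (intro exI[of _ V] exI[of _ l]) (auto simp: div_Suc' Q_Suc)
  done
lemma D2b: "n \<in> (+) (8*c+22) ` R2 (Suc (Suc (Suc (2*c)))) \<Longrightarrow> \<exists>V l. V div 2^Suc l = Suc c \<and> V div 2^l = Suc (Suc (Suc (2*c))) \<and> n + 8*Suc c = Q V (Suc l)"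
  unfolding memsh2 apply (elim exE conjE)
  subgoal for V l by (intro exI[of _ V] exI[of _ l]) (auto simp: div_Suc' Q_Suc)
  done
lemma D1a: "n \<in> (+) (8*c+15) ` R1 (Suc (Suc (2*c))) \<Longrightarrow> \<exists>V l j. j < l \<and> V div 2^Suc l = Suc c \<and> V div 2^l = Suc (Suc (2*c)) \<and> n + 8*Suc c = Q V (Suc l) + Suc j"
  unfolding memsh1 apply (elim exE conjE)
  subgoal for V l j by (intro exI[of _ V] exI[of _ l] exI[of _ j]) (auto simp: div_Suc' Q_Suc)
  done
lemma D1b: "n \<in> (+) (8*c+23) ` R1 (Suc (Suc (Suc (2*c)))) \<Longrightarrow> \<exists>V l j. j < l \<and> V div 2^Suc l = Suc c \<and> V div 2^l = Suc (Suc (Suc (2*c))) \<and> n + 8*Suc c = Q V (Suc l) + Suc j"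
  unfolding memsh1 apply (elim exE conjE)
  subgoal for V l j by (intro exI[of _ V] exI[of _ l] exI[of _ j]) (auto simp: div_Suc' Q_Suc)
  done
lemma DD: "n = 2*c*c+10*c+11 \<Longrightarrow> Suc c div 2^0 = Suc c \<and> n + 8*Suc c = Q (Suc c) 0 + 0"
  by (simp add: Q_def algebra_simps)

lemma dis2: "(+) (8*c+14) ` R2 (Suc (Suc (2*c))) \<inter> (+) (8*c+22) ` R2 (Suc (Suc (Suc (2*c)))) = {}"
          "(+) (8*c+14) ` R2 (Suc (Suc (2*c))) \<inter> {2*c*c+10*c+11} = {}"
          "(+) (8*c+22) ` R2 (Suc (Suc (Suc (2*c)))) \<inter> {2*c*c+10*c+11} = {}"
proof -
  show "(+) (8*c+14) ` R2 (Suc (Suc (2*c))) \<inter> (+) (8*c+22) ` R2 (Suc (Suc (Suc (2*c)))) = {}"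
  proof (rule ccontr)
    assume "\<not> ?thesis"
    then obtain n where "n \<in> (+) (8*c+14) ` R2 (Suc (Suc (2*c)))" "n \<in> (+) (8*c+22) ` R2 (Suc (Suc (Suc (2*c))))" by blast
    then obtain V l V' l' where a: "V div 2^Suc l = Suc c" "V div 2^l = Suc (Suc (2*c))" "n + 8*Suc c = Q V (Suc l)"
      and b: "V' div 2^Suc l' = Suc c" "V' div 2^l' = Suc (Suc (Suc (2*c)))" "n + 8*Suc c = Q V' (Suc l')"
      using D2a D2b by metis
    have "V = V' \<and> Suc l = Suc l'" using keyinj[of "Suc c" V "Suc l" V' "Suc l'" 0 0] a b by simp
    then show False using a b by simp
  qed
  show "(+) (8*c+14) ` R2 (Suc (Suc (2*c))) \<inter> {2*c*c+10*c+11} = {}"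
  proof (rule ccontr)
    assume "\<not> ?thesis"
    then obtain n where "n \<in> (+) (8*c+14) ` R2 (Suc (Suc (2*c)))" "n = 2*c*c+10*c+11" by blast
    then obtain V l where a: "V div 2^Suc l = Suc c" "n + 8*Suc c = Q V (Suc l)"
      and b: "n + 8*Suc c = Q (Suc c) 0 + 0" using D2a DD by metis
    have "Suc l = 0" using keyinj[of "Suc c" V "Suc l" "Suc c" 0 0 0] a b by simp
    then show False by simp
  qed
  show "(+) (8*c+22) ` R2 (Suc (Suc (Suc (2*c)))) \<inter> {2*c*c+10*c+11} = {}"
  proof (rule ccontr)
    assume "\<not> ?thesis"
    then obtain n where "n \<in> (+) (8*c+22) ` R2 (Suc (Suc (Suc (2*c))))" "n = 2*c*c+10*c+11" by blast
    then obtain V l where a: "V div 2^Suc l = Suc c" "n + 8*Suc c = Q V (Suc l)"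
      and b: "n + 8*Suc c = Q (Suc c) 0 + 0" using D2b DD by metis
    have "Suc l = 0" using keyinj[of "Suc c" V "Suc l" "Suc c" 0 0 0] a b by simp
    then show False by simp
  qed
qed

lemma dis1: "(+) (8*c+15) ` R1 (Suc (Suc (2*c))) \<inter> (+) (8*c+23) ` R1 (Suc (Suc (Suc (2*c)))) = {}"
          "(+) (8*c+15) ` R1 (Suc (Suc (2*c))) \<inter> (+) (8*c+22) ` R2 (Suc (Suc (Suc (2*c)))) = {}"
          "(+) (8*c+23) ` R1 (Suc (Suc (Suc (2*c)))) \<inter> (+) (8*c+22) ` R2 (Suc (Suc (Suc (2*c)))) = {}"
proof -
  show "(+) (8*c+15) ` R1 (Suc (Suc (2*c))) \<inter> (+) (8*c+23) ` R1 (Suc (Suc (Suc (2*c)))) = {}"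
  proof (rule ccontr)
    assume "\<not> ?thesis"
    then obtain n where "n \<in> (+) (8*c+15) ` R1 (Suc (Suc (2*c)))" "n \<in> (+) (8*c+23) ` R1 (Suc (Suc (Suc (2*c))))" by blast
    then obtain V l j V' l' j' where a: "j < l" "V div 2^Suc l = Suc c" "V div 2^l = Suc (Suc (2*c))" "n + 8*Suc c = Q V (Suc l) + Suc j"
      and b: "j' < l'" "V' div 2^Suc l' = Suc c" "V' div 2^l' = Suc (Suc (Suc (2*c)))" "n + 8*Suc c = Q V' (Suc l') + Suc j'"
      using D1a D1b by metis
    have "V = V' \<and> Suc l = Suc l'" using keyinj[of "Suc c" V "Suc l" V' "Suc l'" "Suc j" "Suc j'"] a b by simp
    then show False using a b by simp
  qed
  show "(+) (8*c+15) ` R1 (Suc (Suc (2*c))) \<inter> (+) (8*c+22) ` R2 (Suc (Suc (Suc (2*c)))) = {}"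
  proof (rule ccontr)
    assume "\<not> ?thesis"
    then obtain n where "n \<in> (+) (8*c+15) ` R1 (Suc (Suc (2*c)))" "n \<in> (+) (8*c+22) ` R2 (Suc (Suc (Suc (2*c))))" by blast
    then obtain V l j V' l' where a: "j < l" "V div 2^Suc l = Suc c" "n + 8*Suc c = Q V (Suc l) + Suc j"
      and b: "V' div 2^Suc l' = Suc c" "n + 8*Suc c = Q V' (Suc l') + 0"
      using D1a D2b by (metis add_0_right)
    have "Suc j = 0" using keyinj[of "Suc c" V "Suc l" V' "Suc l'" "Suc j" 0] a b by simp
    then show False by simp
  qed
  show "(+) (8*c+23) ` R1 (Suc (Suc (Suc (2*c)))) \<inter> (+) (8*c+22) ` R2 (Suc (Suc (Suc (2*c)))) = {}"
  proof (rule ccontr)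
    assume "\<not> ?thesis"
    then obtain n where "n \<in> (+) (8*c+23) ` R1 (Suc (Suc (Suc (2*c))))" "n \<in> (+) (8*c+22) ` R2 (Suc (Suc (Suc (2*c))))" by blast
    then obtain V l j V' l' where a: "j < l" "V div 2^Suc l = Suc c" "n + 8*Suc c = Q V (Suc l) + Suc j"
      and b: "V' div 2^Suc l' = Suc c" "n + 8*Suc c = Q V' (Suc l') + 0"
      using D1b D2b by (metis add_0_right)
    have "Suc j = 0" using keyinj[of "Suc c" V "Suc l" V' "Suc l'" "Suc j" 0] a b by simp
    then show False by simp
  qed
qed



lemma main: "goodL 31 (St 1 (Suc c) 0) (R1 (Suc c)) N \<and> goodL 31 (St 2 (Suc c) 0) (R2 (Suc c)) N"
proof (induction N arbitrary: c rule: less_induct)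
  case (less N)
  show ?case
  proof (cases N)
    case 0 then show ?thesis by (simp add: goodL_0)
  next
    case (Suc N')
    have lt: "\<And>k. N - Suc k < N" using Suc by simp
    have i20: "goodL 31 (St 2 (Suc (Suc (2*c))) 0) (R2 (Suc (Suc (2*c)))) (N - 1 - (8*c+13))"
      using less.IH[of "N - 1 - (8*c+13)" "Suc (2*c)"] lt by (metis diff_diff_left plus_1_eq_Suc)
    have i21: "goodL 31 (St 2 (Suc (Suc (Suc (2*c)))) 0) (R2 (Suc (Suc (Suc (2*c))))) (N - 1 - (8*c+21))"
      using less.IH[of "N - 1 - (8*c+21)" "Suc (Suc (2*c))"] lt by (metis diff_diff_left plus_1_eq_Suc)
    have j0: "goodL 31 (St 1 (Suc (Suc (2*c))) 0) (R1 (Suc (Suc (2*c)))) (N - 1 - (8*c+14))"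
      using less.IH[of "N - 1 - (8*c+14)" "Suc (2*c)"] lt by (metis diff_diff_left plus_1_eq_Suc)
    have j1: "goodL 31 (St 1 (Suc (Suc (Suc (2*c)))) 0) (R1 (Suc (Suc (Suc (2*c))))) (N - 1 - (8*c+22))"
      using less.IH[of "N - 1 - (8*c+22)" "Suc (Suc (2*c))"] lt by (metis diff_diff_left plus_1_eq_Suc)
    have js: "goodL 31 (St 2 (Suc (Suc (Suc (2*c)))) 0) (R2 (Suc (Suc (Suc (2*c))))) (N - 1 - (8*c+21))"
      by (rule i21)
    have d2: "(+) (8*c+13) ` R2 (Suc (Suc (2*c))) \<inter> (+) (8*c+21) ` R2 (Suc (Suc (Suc (2*c)))) = {}"
      using shiftdisj[OF dis2(1)[of c], of 1] by (simp add: algebra_simps)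
    have r2: "goodL 7 (St 2 c 0) ((+) (8*c+13) ` R2 (Suc (Suc (2*c))) \<union> (+) (8*c+21) ` R2 (Suc (Suc (Suc (2*c))))) (N - 1)"
      by (rule round2[OF i20 i21 d2])
    have d32: "goodL 32 (St 2 c 0) ((+) (4*c+7) ` {D c}) (N - 1)"
      by (rule drain_step) (rule drain43)
    have dd: "((+) (8*c+13) ` R2 (Suc (Suc (2*c))) \<union> (+) (8*c+21) ` R2 (Suc (Suc (Suc (2*c))))) \<inter> (+) (4*c+7) ` {D c} = {}"
    proof (rule ccontr)
      assume "\<not> ?thesis"
      then obtain x where x: "x \<in> (+) (8*c+13) ` R2 (Suc (Suc (2*c))) \<union> (+) (8*c+21) ` R2 (Suc (Suc (Suc (2*c))))"
        "x = 2*c*c+10*c+10" by (auto simp: D_def)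
      then have "Suc x \<in> (+) (8*c+14) ` R2 (Suc (Suc (2*c))) \<union> (+) (8*c+22) ` R2 (Suc (Suc (Suc (2*c))))"
        by (auto intro: image_eqI)
      then show False using dis2(2,3)[of c] x(2) by auto
    qed
    have m2: "goodL 31 (St 2 (Suc c) 0) (Suc ` ((+) (8*c+13) ` R2 (Suc (Suc (2*c))) \<union> (+) (8*c+21) ` R2 (Suc (Suc (Suc (2*c)))))
          \<union> Suc ` (+) (4*c+7) ` {D c} \<union> Suc ` {}) N"
      by (rule goodL3) (insert r2 d32 dd, simp add: vf del: replicate_Suc)+
    have m2': "goodL 31 (St 2 (Suc c) 0) (R2 (Suc c)) N"
      by (rule goodL_cong[OF m2], subst E2[of c]) (simp add: image_image image_Un D_def algebra_simps)
    have e01: "(+) (8*c+14) ` R1 (Suc (Suc (2*c))) \<inter> (+) (8*c+22) ` R1 (Suc (Suc (Suc (2*c)))) = {}"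
      using shiftdisj[OF dis1(1)[of c], of 1] by (simp add: algebra_simps)
    have e0s: "(+) (8*c+14) ` R1 (Suc (Suc (2*c))) \<inter> (+) (8*c+21) ` R2 (Suc (Suc (Suc (2*c)))) = {}"
      using shiftdisj[OF dis1(2)[of c], of 1] by (simp add: algebra_simps)
    have e1s: "(+) (8*c+22) ` R1 (Suc (Suc (Suc (2*c)))) \<inter> (+) (8*c+21) ` R2 (Suc (Suc (Suc (2*c)))) = {}"
      using shiftdisj[OF dis1(3)[of c], of 1] by (simp add: algebra_simps)
    have r1: "goodL 7 (St 1 c 0) ((+) (8*c+14) ` R1 (Suc (Suc (2*c))) \<union> (+) (8*c+22) ` R1 (Suc (Suc (Suc (2*c))))
        \<union> (+) (8*c+21) ` R2 (Suc (Suc (Suc (2*c))))) (N - 1)"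
      by (rule round1[OF j0 j1 js e01 e0s e1s])
    have d32': "goodL 32 (St 1 c 0) {} (N - 1)" by (rule drain32_1)
    have m1: "goodL 31 (St 1 (Suc c) 0) (Suc ` ((+) (8*c+14) ` R1 (Suc (Suc (2*c))) \<union> (+) (8*c+22) ` R1 (Suc (Suc (Suc (2*c))))
        \<union> (+) (8*c+21) ` R2 (Suc (Suc (Suc (2*c))))) \<union> Suc ` {} \<union> Suc ` {}) N"
      by (rule goodL3) (insert r1 d32', simp add: vf del: replicate_Suc)+
    have m1': "goodL 31 (St 1 (Suc c) 0) (R1 (Suc c)) N"
      by (rule goodL_cong[OF m1], subst E1[of c]) (simp add: image_image image_Un algebra_simps)
    show ?thesis using m1' m2' by simp
  qed
qed



lemma start: "goodL 1 (Some ([],[])) ((+) 4 ` R1 1) N"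
proof -
  have j0: "goodL 31 (St 1 (Suc (Suc (2*0))) 0) (R1 (Suc (Suc (2*0)))) (N - 4 - 1 - (8*0+14))"
    using main[of 1] by simp
  have j1: "goodL 31 (St 1 (Suc (Suc (Suc (2*0)))) 0) (R1 (Suc (Suc (Suc (2*0))))) (N - 4 - 1 - (8*0+22))"
    using main[of 2] by (simp add: numeral_3_eq_3)
  have js: "goodL 31 (St 2 (Suc (Suc (Suc (2*0)))) 0) (R2 (Suc (Suc (Suc (2*0))))) (N - 4 - 1 - (8*0+21))"
    using main[of 2] by (simp add: numeral_3_eq_3)
  have e01: "(+) (8*0+14) ` R1 (Suc (Suc (2*0))) \<inter> (+) (8*0+22) ` R1 (Suc (Suc (Suc (2*0)))) = {}"
    using shiftdisj[OF dis1(1)[of 0], of 1] by simp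
  have e0s: "(+) (8*0+14) ` R1 (Suc (Suc (2*0))) \<inter> (+) (8*0+21) ` R2 (Suc (Suc (Suc (2*0)))) = {}"
    using shiftdisj[OF dis1(2)[of 0], of 1] by simp
  have e1s: "(+) (8*0+22) ` R1 (Suc (Suc (Suc (2*0)))) \<inter> (+) (8*0+21) ` R2 (Suc (Suc (Suc (2*0)))) = {}"
    using shiftdisj[OF dis1(3)[of 0], of 1] by simp
  have r1: "goodL 7 (St 1 0 0) ((+) (8*0+14) ` R1 (Suc (Suc (2*0))) \<union> (+) (8*0+22) ` R1 (Suc (Suc (Suc (2*0))))
        \<union> (+) (8*0+21) ` R2 (Suc (Suc (Suc (2*0))))) (N - 4 - 1)"
    by (rule round1[OF j0 j1 js e01 e0s e1s])
  have f6: "goodL 6 (St 1 1 0) (Suc ` ((+) (8*0+14) ` R1 (Suc (Suc (2*0))) \<union> (+) (8*0+22) ` R1 (Suc (Suc (Suc (2*0))))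
        \<union> (+) (8*0+21) ` R2 (Suc (Suc (Suc (2*0)))))) (N - 4)"
    by (rule goodL1'[OF r1]) (simp_all add: vf del: replicate_Suc)
  have eqS: "Suc ` ((+) (8*0+14) ` R1 (Suc (Suc (2*0))) \<union> (+) (8*0+22) ` R1 (Suc (Suc (Suc (2*0))))
        \<union> (+) (8*0+21) ` R2 (Suc (Suc (Suc (2*0))))) = R1 (Suc 0)"
    unfolding E1[of 0] by (simp add: image_image image_Un)
  have f6': "goodL 6 (Some ([1,0],[1])) (R1 1) (N - 4)"
    using f6 eqS by simp
  have f5: "goodL 5 (Some ([1,0],[1])) (Suc ` R1 1) (N - 3)"
    by (rule goodL1'[OF f6']) (simp_all add: vf)
  have f4: "goodL 4 (Some ([1],[1])) (Suc ` Suc ` R1 1) (N - 2)"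
    by (rule goodL1'[OF f5]) (simp_all add: vf)
  have f3: "goodL 3 (Some ([1],[])) (Suc ` Suc ` Suc ` R1 1) (N - 1)"
    by (rule goodL1'[OF f4]) (simp_all add: vf)
  have su1': "succs (Suc 0) = [3]" using su1 by simp
  have "goodL 1 (Some ([],[])) (Suc ` Suc ` Suc ` Suc ` R1 1) N"
    by (rule goodL1'[OF f3]) (simp_all add: vf su1')
  then show ?thesis by (rule goodL_cong) (auto simp: image_image)
qed


lemma rh1': "rh (Suc 0) = Eps" using rh1 by simp

lemma Gset: "{\<gamma>. is_path 45 EE \<gamma> \<and> length \<gamma> = n \<and> hd \<gamma> = 1 \<and> last \<gamma> = 2 \<and> balanced rh \<gamma>}
   = Cons 1 ` {q \<in> PL 1 (Some ([],[])) (Suc n). Suc (length q) = n}"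
proof (intro set_eqI iffI)
  fix g assume g: "g \<in> {\<gamma>. is_path 45 EE \<gamma> \<and> length \<gamma> = n \<and> hd \<gamma> = 1 \<and> last \<gamma> = 2 \<and> balanced rh \<gamma>}"
  then obtain q where gq: "g = 1 # q" by (cases g) (auto simp: is_path_def)
  have "q \<in> PL 1 (Some ([],[])) (Suc n)" "Suc (length q) = n"
    using g gq rh1' by (auto simp: PL_def balanced_def run_def)
  then show "g \<in> Cons 1 ` {q \<in> PL 1 (Some ([],[])) (Suc n). Suc (length q) = n}" using gq by blast
next
  fix g assume "g \<in> Cons 1 ` {q \<in> PL 1 (Some ([],[])) (Suc n). Suc (length q) = n}"
  then obtain q where gq: "g = 1 # q" "q \<in> PL 1 (Some ([],[])) (Suc n)" "Suc (length q) = n" by blast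
  then show "g \<in> {\<gamma>. is_path 45 EE \<gamma> \<and> length \<gamma> = n \<and> hd \<gamma> = 1 \<and> last \<gamma> = 2 \<and> balanced rh \<gamma>}"
    using rh1' by (auto simp: PL_def balanced_def run_def)
qed

lemma Gval: "G 45 rh EE n = (if 1 \<le> n \<and> n - 1 \<in> (+) 4 ` R1 1 then 1 else 0)"
proof -
  let ?P = "PL 1 (Some ([],[])) (Suc n)"
  let ?S = "{q \<in> ?P. Suc (length q) = n}"
  have g: "goodL 1 (Some ([],[])) ((+) 4 ` R1 1) (Suc n)" by (rule start)
  have inj: "inj_on length ?P" and img: "length ` ?P = {m \<in> (+) 4 ` R1 1. m < Suc n}"
    using g unfolding goodL_def by auto
  have "G 45 rh EE n = card (Cons 1 ` ?S)" unfolding G_def Gset ..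
  also have "\<dots> = card ?S" by (rule card_image) (simp add: inj_on_def)
  also have "\<dots> = (if 1 \<le> n \<and> n - 1 \<in> (+) 4 ` R1 1 then 1 else 0)"
  proof (cases "1 \<le> n \<and> n - 1 \<in> (+) 4 ` R1 1")
    case True
    then have "n - 1 \<in> length ` ?P" using img by auto
    then obtain q where q: "q \<in> ?P" "length q = n - 1" by auto
    have "?S = {q}"
    proof
      show "?S \<subseteq> {q}" using inj q True unfolding inj_on_def by auto
      show "{q} \<subseteq> ?S" using q True by auto
    qed
    then have "card ?S = 1" by (metis card.empty card_insert_disjoint empty_iff finite.emptyI One_nat_def)
    moreover have "(if 1 \<le> n \<and> n - 1 \<in> (+) 4 ` R1 1 then 1 else 0) = (1::nat)" using True by simp
    ultimately show ?thesis by linarith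
  next
    case False
    have "?S = {}"
    proof (rule ccontr)
      assume "?S \<noteq> {}"
      then obtain q where q: "q \<in> ?P" "Suc (length q) = n" by auto
      then have "length q \<in> (+) 4 ` R1 1" using img by auto
      then show False using False q by auto
    qed
    then have "card ?S = 0" by (metis card.empty)
    moreover have "(if 1 \<le> n \<and> n - 1 \<in> (+) 4 ` R1 1 then 1 else 0) = (0::nat)" using False by simp
    ultimately show ?thesis by linarith
  qed
  finally show ?thesis .
qed

lemma G01: "G 45 rh EE n \<in> {0, 1}"
  by (simp add: Gval)

definition fb :: "nat \<Rightarrow> nat \<Rightarrow> nat" where "fb a b = 2*a + b"

lemma fb_Cons: "foldl fb a (y#ys) = foldl fb (2*a+y) ys" by (simp add: fb_def)

lemma fl_gen: "foldl fb a ys = a * 2^length ys + foldl fb 0 ys"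
proof (induction ys arbitrary: a)
  case Nil then show ?case by simp
next
  case (Cons y ys)
  have e1: "foldl fb a (y # ys) = (2*a+y) * 2^length ys + foldl fb 0 ys"
    unfolding fb_Cons by (rule Cons.IH)
  have e2: "foldl fb 0 (y # ys) = y * 2^length ys + foldl fb 0 ys"
    unfolding fb_Cons using Cons.IH[of y] by simp
  show ?case using e1 e2 by (simp add: algebra_simps)
qed

lemma fl_bound: "set ys \<subseteq> {0,1} \<Longrightarrow> foldl fb 0 ys < 2^length ys"
proof (induction ys)
  case Nil then show ?case by simp
next
  case (Cons y ys)
  have a: "foldl fb 0 (y # ys) = y * 2^length ys + foldl fb 0 ys"
    unfolding fb_Cons using fl_gen[of y ys] by simp
  have "y \<le> 1" using Cons.prems by auto
  then have b: "y * 2^length ys \<le> 2^length ys" using mult_le_mono1[of y 1 "2^length ys"] by simp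
  have c: "foldl fb 0 ys < 2^length ys" using Cons by auto
  have "(2::nat) ^ length (y # ys) = 2^length ys + 2^length ys" by simp
  then show ?case using a b c by linarith
qed

lemma fl_div: "set ys \<subseteq> {0,1} \<Longrightarrow> foldl fb a ys div 2^length ys = a"
proof -
  assume h: "set ys \<subseteq> {0,1}"
  have "foldl fb a ys = foldl fb 0 ys + a * 2^length ys" using fl_gen[of a ys] by simp
  then show ?thesis using fl_bound[OF h] by simp
qed

lemma window:
  assumes w: "set w \<subseteq> {0,1}" and ne: "w \<noteq> []"
  shows "\<exists>k\<ge>1. \<forall>j < length w. G 45 rh EE (k + j) = w ! j"
proof -
  let ?L = "length w"
  let ?V = "foldl fb 1 w"
  have Vd: "?V div 2^?L = 1" using fl_div[OF w] by simp
  have bits: "odd (?V div 2^(?L - Suc j)) \<longleftrightarrow> w ! j = 1" if j: "j < ?L" for j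
  proof -
    have wsplit: "w = take (Suc j) w @ drop (Suc j) w" by simp
    have sd: "set (drop (Suc j) w) \<subseteq> {0,1}" using w by (meson order_trans set_drop_subset)
    have ld: "length (drop (Suc j) w) = ?L - Suc j" by simp
    have "?V = foldl fb (foldl fb 1 (take (Suc j) w)) (drop (Suc j) w)"
      by (subst wsplit) (simp only: foldl_append)
    then have e1: "?V div 2^(?L - Suc j) = foldl fb 1 (take (Suc j) w)"
      using fl_div[OF sd] ld by metis
    have "take (Suc j) w = take j w @ [w ! j]" using j by (simp add: take_Suc_conv_app_nth)
    then have e2: "foldl fb 1 (take (Suc j) w) = 2 * foldl fb 1 (take j w) + w ! j" by (simp add: fb_def)
    have wj: "w ! j \<in> {0,1}" using w nth_mem[OF j] by blast
    show ?thesis using e1 e2 wj by auto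
  qed
  define k where "k = 2*?V*?V + 14*?V + 6*?L"
  have V1: "1 \<le> ?V" using Vd by (metis div_le_dividend)
  have k1: "1 \<le> k" using V1 unfolding k_def by simp
  have "\<forall>j < ?L. G 45 rh EE (k + j) = w ! j"
  proof (intro allI impI)
    fix j assume j: "j < ?L"
    have mem: "k + j - 1 \<in> (+) 4 ` R1 1 \<longleftrightarrow> w ! j = 1"
    proof
      assume "k + j - 1 \<in> (+) 4 ` R1 1"
      then obtain V' l' j' where h: "V' div 2^l' = 1" "j' < l'" "odd (V' div 2^(l' - Suc j'))"
        "k + j - 1 + 8*1 = Q V' l' + j' + 4" unfolding memsh1 by blast
      have "Q ?V ?L + j = Q V' l' + j'" using h(4) k1 unfolding k_def Q_def by simp
      then have "?V = V' \<and> ?L = l' \<and> j = j'"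
        using keyinj[of 1 ?V ?L V' l' j j'] Vd h(1,2) j by simp
      then show "w ! j = 1" using h(3) bits[OF j] by simp
    next
      assume "w ! j = 1"
      then have "odd (?V div 2^(?L - Suc j))" using bits[OF j] by simp
      moreover have "k + j - 1 + 8*1 = Q ?V ?L + j + 4" using k1 unfolding k_def Q_def by simp
      ultimately show "k + j - 1 \<in> (+) 4 ` R1 1" unfolding memsh1 using Vd j by blast
    qed
    have wj: "w ! j \<in> {0,1}" using w nth_mem[OF j] by blast
    show "G 45 rh EE (k + j) = w ! j" using mem wj k1 by (auto simp: Gval)
  qed
  then show ?thesis using k1 by blast
qed

theorem lemma2p3:
  shows "\<exists>m rho E. two_stack_automaton m rho E \<and>
           (\<forall>n. G m rho E n \<in> {0, 1}) \<and>
           (\<forall>w :: nat list. set w \<subseteq> {0, 1} \<longrightarrow>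
              (\<exists>k\<ge>1. \<forall>j < length w. G m rho E (k + j) = w ! j))"
proof -
  have "\<forall>w :: nat list. set w \<subseteq> {0, 1} \<longrightarrow> (\<exists>k\<ge>1. \<forall>j < length w. G 45 rh EE (k + j) = w ! j)"
  proof (intro allI impI)
    fix w :: "nat list" assume w: "set w \<subseteq> {0, 1}"
    show "\<exists>k\<ge>1. \<forall>j < length w. G 45 rh EE (k + j) = w ! j"
    proof (cases "w = []")
      case True then show ?thesis by auto
    next
      case False then show ?thesis by (rule window[OF w])
    qed
  qed
  then show ?thesis using aut G01 by blast
qed


end
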